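(* Let $(Y_n)_{n\ge0}$ be the stationary backward Markov process on $\mathbb{T}^n$ with initial density $\theta$ and transition kernel $Q$: $Y_0$ has density $\theta$, and given $Y_k=x$, $Y_{k+1}=x-V$ where $V$ has density $v\mapsto Q(x,v)$ on $\mathbb{R}^n$. Let $f,g\in\mathcal{L}^2(\theta)$ with $\int f\theta\,dx=\int g\theta\,dx=0$. Then $\mathbb{E}[g(Y_0)f(Y_n)]=\int f(x)(\mathcal{F}^ng)(x)\theta(x)dx\to0$ exponentially fast as $n\to\infty$: there exist $\rho\in(0,1)$ (independent of $f,g$) and $C=C(f,g)$ with $|\mathbb{E}[g(Y_0)f(Y_n)]|\le C\rho^n$ for all $n$.
   Context: Let $\mathbb{T}^n=\mathbb{R}^n/\mathbb{Z}^n$; $x\pm v$ is taken mod $\mathbb{Z}^n$. Let $L(x,v)=\frac12|v|^2-U(x)+\langle P,v\rangle$ with $U\in C^\infty(\mathbb{T}^n)$, $P\in\mathbb{R}^n$. Fix $\epsilon>0$, $h=1$. Let $\phi,\bar\phi$ (differentiable on $\mathbb{T}^n$) and $\lambda\in\mathbb{R}$ satisfy $-\epsilon\ln\int_{\mathbb{R}^n}e^{-(L(x,v)+\phi(x+v))/\epsilon}dv=\phi(x)+\lambda$ and $-\epsilon\ln\int_{\mathbb{R}^n}e^{-(L(x+v,-v)+\bar\phi(x+v))/\epsilon}dv=\bar\phi(x)+\lambda$, normalized so that $\theta=e^{-(\phi+\bar\phi)/\epsilon}$ is a probability density on $\mathbb{T}^n$. Set $\gamma(x,v)=e^{-(L(x,v)+\phi(x+v)-\phi(x)-\lambda)/\epsilon}$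 and $Q(x,v)=\theta(x-v)\gamma(x-v,v)/\theta(x)$; it is known (assumed) that $\int\gamma(x,v)dv=\int Q(x,v)dv=1$ for all $x$, that $\theta\gamma$ is holonomic, and that the positive fixed point of $\mathcal{F}$ is unique up to scaling. $(\mathcal{F}g)(x)=\int\gamma(x,v)g(x+v)dv$ and $(\mathcal{F}^*f)(x)=\int Q(x,v)f(x-v)dv$; $\mathcal{L}^2(\theta)=L^2(\mathbb{T}^n,\theta\,dx)$. *)

theory Defs
  imports "HOL-Analysis.Analysis"
begin

text \<open>The torus T^n = R^n / Z^n is modelled by Z^n-periodic functions on real^'n;
  integration over T^n is integration over the unit cube [0,1]^n.\<close>

definition int_vec :: "real^'n \<Rightarrow> bool" where
  "int_vec k \<longleftrightarrow> (\<forall>i. k $ i \<in> \<int>)"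

definition torus_fun :: "(real^'n \<Rightarrow> 'b) \<Rightarrow> bool" where
  "torus_fun h \<longleftrightarrow> (\<forall>x k. int_vec k \<longrightarrow> h (x + k) = h x)"

definition torus_integral :: "(real^'n \<Rightarrow> real) \<Rightarrow> real" where
  "torus_integral h = (LINT x : cbox 0 One | lborel. h x)"

definition partial_deriv :: "'n \<Rightarrow> (real^'n \<Rightarrow> real) \<Rightarrow> real^'n \<Rightarrow> real" where
  "partial_deriv i h x = deriv (\<lambda>t. h (x + t *\<^sub>R axis i 1)) 0"

definition smooth_fun :: "(real^'n \<Rightarrow> real) \<Rightarrow> bool" where
  "smooth_fun h \<longleftrightarrow> (\<forall>is :: 'n list. (foldr partial_deriv is h) differentiable_on UNIV)"

definition lagr :: "(real^'n \<Rightarrow> real) \<Rightarrow> real^'n \<Rightarrow> real^'n \<Rightarrow> real^'n \<Rightarrow> real" where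
  "lagr U P x v = (norm v)\<^sup>2 / 2 - U x + P \<bullet> v"

definition opF :: "(real^'n \<Rightarrow> real^'n \<Rightarrow> real) \<Rightarrow> (real^'n \<Rightarrow> real) \<Rightarrow> real^'n \<Rightarrow> real" where
  "opF \<gamma> g x = (\<integral>v. \<gamma> x v * g (x + v) \<partial>lborel)"

definition opFstar :: "(real^'n \<Rightarrow> real^'n \<Rightarrow> real) \<Rightarrow> (real^'n \<Rightarrow> real) \<Rightarrow> real^'n \<Rightarrow> real" where
  "opFstar Q f x = (\<integral>v. Q x v * f (x - v) \<partial>lborel)"

definition holonomic :: "(real^'n \<Rightarrow> real^'n \<Rightarrow> real) \<Rightarrow> bool" where
  "holonomic \<mu> \<longleftrightarrow> (\<forall>\<psi>. continuous_on UNIV \<psi> \<and> torus_fun \<psi> \<longrightarrow>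
      torus_integral (\<lambda>x. \<integral>v. \<mu> x v * \<psi> (x + v) \<partial>lborel) =
      torus_integral (\<lambda>x. \<integral>v. \<mu> x v * \<psi> x \<partial>lborel))"

definition L2_theta :: "(real^'n \<Rightarrow> real) \<Rightarrow> (real^'n \<Rightarrow> real) \<Rightarrow> bool" where
  "L2_theta \<theta> f \<longleftrightarrow> torus_fun f \<and> f \<in> borel_measurable lborel \<and>
      set_integrable lborel (cbox 0 One) (\<lambda>x. (f x)\<^sup>2 * \<theta> x)"

text \<open>E[g(Y_0) f(Y_n)] for the stationary backward Markov chain with initial density theta
  and kernel Q (Y_{k+1} = Y_k - V, V ~ Q(Y_k, .)): by the Markov property
  E[f(Y_n) | Y_0 = x] = ((F^*)^n f)(x), so the expectation is
  the integral over T^n of g(x) ((F^*)^n f)(x) theta(x).\<close>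

definition backward_corr ::
  "(real^'n \<Rightarrow> real) \<Rightarrow> (real^'n \<Rightarrow> real^'n \<Rightarrow> real) \<Rightarrow>
   (real^'n \<Rightarrow> real) \<Rightarrow> (real^'n \<Rightarrow> real) \<Rightarrow> nat \<Rightarrow> real" where
  "backward_corr \<theta> Q g f n = torus_integral (\<lambda>x. g x * ((opFstar Q ^^ n) f) x * \<theta> x)"

end

theory Submission
  imports Defs "HOL-Library.Countable"
begin


lemma distr_affine_eq:
  fixes t :: "'a::euclidean_space" and c :: real
  assumes "\<bar>c\<bar> = 1"
  shows "distr lborel borel (\<lambda>x. t + c *\<^sub>R x) = lborel"
proof -
  have "c \<noteq> 0" using assms by auto
  from lborel_affine[OF this, of t] assms
  have "lborel = density (distr lborel borel (\<lambda>x. t + c *\<^sub>R x)) (\<lambda>_. 1)" by simp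
  also have "\<dots> = distr lborel borel (\<lambda>x. t + c *\<^sub>R x)" by (simp add: density_1)
  finally show ?thesis by simp
qed

lemma nn_affine:
  fixes t :: "'a::euclidean_space" and c :: real
  assumes "\<bar>c\<bar> = 1" and [measurable]: "f \<in> borel_measurable borel"
  shows "(\<integral>\<^sup>+x. f x \<partial>lborel) = (\<integral>\<^sup>+x. f (t + c *\<^sub>R x) \<partial>lborel)"
proof -
  have "(\<integral>\<^sup>+x. f x \<partial>lborel) = (\<integral>\<^sup>+x. f x \<partial>distr lborel borel (\<lambda>x. t + c *\<^sub>R x))"
    by (simp only: distr_affine_eq[OF assms(1)])
  also have "\<dots> = (\<integral>\<^sup>+x. f (t + c *\<^sub>R x) \<partial>lborel)"
    by (subst nn_integral_distr) auto
  finally show ?thesis .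
qed

lemma nn_trans:
  fixes t :: "'a::euclidean_space"
  assumes "f \<in> borel_measurable borel"
  shows "(\<integral>\<^sup>+x. f x \<partial>lborel) = (\<integral>\<^sup>+x. f (t + x) \<partial>lborel)"
  using nn_affine[OF _ assms, of 1 t] by simp

lemma nn_refl:
  fixes t :: "'a::euclidean_space"
  assumes "f \<in> borel_measurable borel"
  shows "(\<integral>\<^sup>+x. f x \<partial>lborel) = (\<integral>\<^sup>+x. f (t - x) \<partial>lborel)"
  using nn_affine[OF _ assms, of "-1" t] by simp

lemma int_affine:
  fixes t :: "'a::euclidean_space" and c :: real and f :: "'a \<Rightarrow> real"
  assumes "\<bar>c\<bar> = 1" and [measurable]: "f \<in> borel_measurable borel"
  shows "(\<integral>x. f x \<partial>lborel) = (\<integral>x. f (t + c *\<^sub>R x) \<partial>lborel)"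
proof -
  have "(\<integral>x. f x \<partial>lborel) = (\<integral>x. f x \<partial>distr lborel borel (\<lambda>x. t + c *\<^sub>R x))"
    by (simp only: distr_affine_eq[OF assms(1)])
  also have "\<dots> = (\<integral>x. f (t + c *\<^sub>R x) \<partial>lborel)"
    by (subst integral_distr) auto
  finally show ?thesis .
qed

lemma int_trans:
  fixes t :: "'a::euclidean_space" and f :: "'a \<Rightarrow> real"
  assumes "f \<in> borel_measurable borel"
  shows "(\<integral>x. f x \<partial>lborel) = (\<integral>x. f (t + x) \<partial>lborel)"
  using int_affine[OF _ assms, of 1 t] by simp

lemma int_refl:
  fixes t :: "'a::euclidean_space" and f :: "'a \<Rightarrow> real"
  assumes "f \<in> borel_measurable borel"
  shows "(\<integral>x. f x \<partial>lborel) = (\<integral>x. f (t - x) \<partial>lborel)"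
  using int_affine[OF _ assms, of "-1" t] by simp

definition Hc :: "(real^'n) set" where
  "Hc = {x. \<forall>i. 0 \<le> x$i \<and> x$i < 1}"

definition lv :: "('n \<Rightarrow> int) \<Rightarrow> real^'n" where
  "lv k = (\<chi> i. of_int (k i))"

definition kfl :: "real^'n \<Rightarrow> ('n \<Rightarrow> int)" where
  "kfl y = (\<lambda>i. \<lfloor>y$i\<rfloor>)"

lemma Hc_sets[measurable]: "(Hc :: (real^'n) set) \<in> sets borel"
proof -
  have "Hc = (\<Inter>i\<in>UNIV. {x::real^'n. 0 \<le> x$i} \<inter> {x. x$i < 1})"
    unfolding Hc_def by auto
  moreover have "\<And>i. {x::real^'n. 0 \<le> x$i} \<in> sets borel"
    by (intro borel_closed closed_Collect_le continuous_intros)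
  moreover have "\<And>i. {x::real^'n. x$i < 1} \<in> sets borel"
    by (intro borel_open open_Collect_less continuous_intros)
  moreover have "(\<Inter>i\<in>UNIV. {x::real^'n. 0 \<le> x$i} \<inter> {x. x$i < 1}) \<in> sets borel"
    by (rule sets.finite_INT) (auto intro!: sets.Int calculation)
  ultimately show ?thesis by simp
qed

lemma ind_Hc_lv: "indicator Hc (y - lv k) = (indicator {kfl y} k :: ennreal)"
proof -
  have "(y - lv k \<in> Hc) \<longleftrightarrow> k = kfl y"
  proof
    assume a: "y - lv k \<in> Hc"
    show "k = kfl y"
    proof
      fix i
      from a have "0 \<le> y$i - of_int (k i)" "y$i - of_int (k i) < 1"
        unfolding Hc_def lv_def by auto
      then show "k i = kfl y i" unfolding kfl_def by linarith
    qed
  next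
    assume "k = kfl y" then show "y - lv k \<in> Hc"
      unfolding Hc_def lv_def kfl_def by (auto simp: of_int_floor_le) (smt (verit, best) real_of_int_floor_add_one_gt)
  qed
  then show ?thesis unfolding indicator_def by auto
qed

lemma lv_minus: "lv (\<lambda>i. - k i) = - lv k"
  unfolding lv_def by (auto simp: vec_eq_iff)

lemma int_vec_lv: "int_vec (lv k)" unfolding int_vec_def lv_def by auto

lemma int_vec_ex: "int_vec k \<Longrightarrow> \<exists>l. k = lv l"
  unfolding int_vec_def lv_def
  by (rule exI[of _ "\<lambda>i. (SOME j. k$i = of_int j)"]) (auto simp: vec_eq_iff Ints_def intro: someI)

interpretation cl: pair_sigma_finite "count_space (UNIV::('n::finite \<Rightarrow> int) set)" lborel
  by (intro pair_sigma_finite.intro sigma_finite_measure_count_space sigma_finite_lborel)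

lemma meas_cl:
  assumes "\<And>k. (\<lambda>y. f k y) \<in> borel_measurable borel"
  shows "case_prod f \<in> borel_measurable (count_space (UNIV::('n::finite \<Rightarrow> int) set) \<Otimes>\<^sub>M lborel)"
  by (rule measurable_pair_measure_countable1) (auto simp: assms measurable_lborel1)

lemma lattice_sum:
  fixes u :: "real^'n \<Rightarrow> ennreal"
  assumes [measurable]: "u \<in> borel_measurable borel"
  shows "(\<integral>\<^sup>+y. u y \<partial>lborel) =
    (\<integral>\<^sup>+x. indicator Hc x * (\<integral>\<^sup>+k. u (x + lv k) \<partial>count_space UNIV) \<partial>lborel)"
proof -
  have m1[measurable]: "\<And>k. (\<lambda>y. lv k + y) \<in> borel_measurable borel" by simp
  have "(\<integral>\<^sup>+y. u y \<partial>lborel) = (\<integral>\<^sup>+y. (\<integral>\<^sup>+k. u y * indicator Hc (y - lv k) \<partial>count_space UNIV) \<partial>lborel)"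
    by (simp add: ind_Hc_lv nn_integral_cmult_indicator)
  also have "\<dots> = (\<integral>\<^sup>+k. (\<integral>\<^sup>+y. u y * indicator Hc (y - lv k) \<partial>lborel) \<partial>count_space UNIV)"
    by (rule cl.Fubini'[OF meas_cl]) simp
  also have "\<dots> = (\<integral>\<^sup>+k. (\<integral>\<^sup>+x. u (x + lv k) * indicator Hc x \<partial>lborel) \<partial>count_space UNIV)"
  proof (rule nn_integral_cong)
    fix k
    have "(\<integral>\<^sup>+y. u y * indicator Hc (y - lv k) \<partial>lborel) = (\<integral>\<^sup>+x. u (lv k + x) * indicator Hc (lv k + x - lv k) \<partial>lborel)"
      by (rule nn_trans) simp
    then show "(\<integral>\<^sup>+y. u y * indicator Hc (y - lv k) \<partial>lborel) = (\<integral>\<^sup>+x. u (x + lv k) * indicator Hc x \<partial>lborel)"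
      by (simp add: add.commute)
  qed
  also have "\<dots> = (\<integral>\<^sup>+x. (\<integral>\<^sup>+k. u (x + lv k) * indicator Hc x \<partial>count_space UNIV) \<partial>lborel)"
    by (rule cl.Fubini'[OF meas_cl, symmetric]) simp
  also have "\<dots> = (\<integral>\<^sup>+x. indicator Hc x * (\<integral>\<^sup>+k. u (x + lv k) \<partial>count_space UNIV) \<partial>lborel)"
    by (intro nn_integral_cong) (simp add: nn_integral_cmult[symmetric] mult.commute)
  finally show ?thesis .
qed

lemma meas_lc:
  fixes F :: "'k::countable \<Rightarrow> 'a \<Rightarrow> ennreal"
  assumes "\<And>k. F k \<in> borel_measurable N"
  shows "(\<lambda>(x,k). F k x) \<in> borel_measurable (N \<Otimes>\<^sub>M count_space UNIV)"
proof -
  have "(\<lambda>z. (\<lambda>k z. F k (fst z)) (snd z) z) \<in> borel_measurable (N \<Otimes>\<^sub>M count_space UNIV)"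
    by (rule measurable_compose_countable) (auto intro: measurable_compose[OF measurable_fst assms])
  then show ?thesis by (simp add: case_prod_beta')
qed

lemma bij_neg: "bij_betw (\<lambda>k::'n \<Rightarrow> int. \<lambda>i. - k i) UNIV UNIV"
  by (rule bij_betwI[where g="\<lambda>k i. - k i"]) auto

lemma nn_fold:
  fixes \<Phi> :: "real^'n \<Rightarrow> real^'n \<Rightarrow> ennreal"
  assumes meas[measurable]: "case_prod \<Phi> \<in> borel_measurable borel"
    and diag: "\<And>x y k. \<Phi> (x + lv k) (y + lv k) = \<Phi> x y"
  shows "(\<integral>\<^sup>+x. indicator Hc x * (\<integral>\<^sup>+y. \<Phi> x y \<partial>lborel) \<partial>lborel)
       = (\<integral>\<^sup>+y. indicator Hc y * (\<integral>\<^sup>+x. \<Phi> x y \<partial>lborel) \<partial>lborel)"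
proof -
  define G where "G x y = (\<integral>\<^sup>+k. \<Phi> (x - lv k) y \<partial>count_space UNIV)" for x y
  interpret C: sigma_finite_measure "count_space (UNIV::('n \<Rightarrow> int) set)"
    by (rule sigma_finite_measure_count_space)
  have mk: "\<And>k::'n\<Rightarrow>int. (\<lambda>z::(real^'n)\<times>(real^'n). \<Phi> (fst z - lv k) (snd z)) \<in> borel_measurable borel"
  proof -
    fix k :: "'n\<Rightarrow>int"
    have "(\<lambda>z::(real^'n)\<times>(real^'n). (fst z - lv k, snd z)) \<in> borel_measurable borel"
      by (intro borel_measurable_continuous_onI continuous_intros)
    from measurable_compose[OF this meas] show "?thesis k" by (simp add: case_prod_beta')
  qed
  have mG: "(\<lambda>z. G (fst z) (snd z)) \<in> borel_measurable borel"
    unfolding G_def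
    by (rule cl.M1.borel_measurable_nn_integral[where f="\<lambda>z k. \<Phi> (fst z - lv k) (snd z)"])
       (rule meas_lc[where F="\<lambda>k z. \<Phi> (fst z - lv k) (snd z)", OF mk])
  have mx[measurable]: "\<Phi> x \<in> borel_measurable borel" for x
  proof -
    have "(\<lambda>y::real^'n. (x, y)) \<in> borel_measurable borel"
      by (intro borel_measurable_continuous_onI continuous_intros)
    from measurable_compose[OF this meas] show ?thesis by simp
  qed
  have my[measurable]: "(\<lambda>x. \<Phi> x y) \<in> borel_measurable borel" for y
  proof -
    have "(\<lambda>x::real^'n. (x, y)) \<in> borel_measurable borel"
      by (intro borel_measurable_continuous_onI continuous_intros)
    from measurable_compose[OF this meas] show ?thesis by simp
  qed
  have mG2[measurable]: "case_prod G \<in> borel_measurable borel"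
    using mG by (simp add: case_prod_beta')
  have mGx: "(\<lambda>y. indicator Hc y * G x y) \<in> borel_measurable lborel" for x
  proof -
    have "(\<lambda>y::real^'n. (x, y)) \<in> borel_measurable borel"
      by (intro borel_measurable_continuous_onI continuous_intros)
    from measurable_compose[OF this mG2] show ?thesis by simp
  qed
  have mGy: "(\<lambda>x. indicator Hc x * G x y) \<in> borel_measurable lborel" for y
  proof -
    have "(\<lambda>x::real^'n. (x, y)) \<in> borel_measurable borel"
      by (intro borel_measurable_continuous_onI continuous_intros)
    from measurable_compose[OF this mG2] show ?thesis by simp
  qed
  have h1: "(\<integral>\<^sup>+y. \<Phi> x y \<partial>lborel) = (\<integral>\<^sup>+y. indicator Hc y * G x y \<partial>lborel)" for x
  proof -
    have "(\<integral>\<^sup>+y. \<Phi> x y \<partial>lborel) = (\<integral>\<^sup>+y. indicator Hc y * (\<integral>\<^sup>+k. \<Phi> x (y + lv k) \<partial>count_space UNIV) \<partial>lborel)"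
      by (rule lattice_sum) measurable
    also have "\<dots> = (\<integral>\<^sup>+y. indicator Hc y * G x y \<partial>lborel)"
    proof -
      have d: "\<Phi> x (y + lv k) = \<Phi> (x - lv k) y" for y k
        using diag[where x="x - lv k" and y=y and k=k] by simp
      show ?thesis unfolding G_def d ..
    qed
    finally show ?thesis .
  qed
  have h2: "(\<integral>\<^sup>+x. \<Phi> x y \<partial>lborel) = (\<integral>\<^sup>+x. indicator Hc x * G x y \<partial>lborel)" for y
  proof -
    have "(\<integral>\<^sup>+x. \<Phi> x y \<partial>lborel) = (\<integral>\<^sup>+x. indicator Hc x * (\<integral>\<^sup>+k. \<Phi> (x + lv k) y \<partial>count_space UNIV) \<partial>lborel)"
      by (rule lattice_sum) measurable
    also have "\<dots> = (\<integral>\<^sup>+x. indicator Hc x * G x y \<partial>lborel)"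
    proof (rule nn_integral_cong)
      fix x
      have "(\<integral>\<^sup>+k. \<Phi> (x + lv k) y \<partial>count_space UNIV) = (\<integral>\<^sup>+k. \<Phi> (x + lv (\<lambda>i. - k i)) y \<partial>count_space UNIV)"
        by (rule nn_integral_bij_count_space[OF bij_neg, symmetric])
      also have "\<dots> = G x y" unfolding G_def lv_minus by simp
      finally show "indicator Hc x * (\<integral>\<^sup>+k. \<Phi> (x + lv k) y \<partial>count_space UNIV) = indicator Hc x * G x y"
        by simp
    qed
    finally show ?thesis .
  qed
  have "(\<integral>\<^sup>+x. indicator Hc x * (\<integral>\<^sup>+y. \<Phi> x y \<partial>lborel) \<partial>lborel)
      = (\<integral>\<^sup>+x. (\<integral>\<^sup>+y. indicator Hc x * (indicator Hc y * G x y) \<partial>lborel) \<partial>lborel)"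
    by (simp add: h1 nn_integral_cmult[OF mGx])
  also have "\<dots> = (\<integral>\<^sup>+y. (\<integral>\<^sup>+x. indicator Hc x * (indicator Hc y * G x y) \<partial>lborel) \<partial>lborel)"
  proof (rule lborel_pair.Fubini'[symmetric])
    have e: "(\<lambda>(x, y). indicator Hc x * (indicator Hc y * G x y)) =
       (\<lambda>z. indicator (Hc \<times> UNIV) z * (indicator (UNIV \<times> Hc) z * G (fst z) (snd z)))"
      by (auto simp: indicator_def)
    have [measurable]: "Hc \<times> UNIV \<in> sets borel" "UNIV \<times> Hc \<in> sets borel"
      by (auto intro!: borel_Times)
    show "(\<lambda>(x, y). indicator Hc x * (indicator Hc y * G x y)) \<in> borel_measurable (lborel \<Otimes>\<^sub>M lborel)"
      unfolding lborel_prod measurable_lborel1 e using mG by measurable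
  qed
  also have "\<dots> = (\<integral>\<^sup>+y. indicator Hc y * (\<integral>\<^sup>+x. \<Phi> x y \<partial>lborel) \<partial>lborel)"
    by (simp add: h2 nn_integral_cmult[OF mGy, symmetric] mult.left_commute)
  finally show ?thesis .
qed

lemma pair_meas_lb:
  "(f \<in> borel_measurable (lborel \<Otimes>\<^sub>M lborel)) = (f \<in> borel_measurable (borel :: ((real^'n) \<times> (real^'n)) measure))"
  by (simp add: lborel_prod measurable_lborel1)

lemma sl_x: assumes "case_prod \<Theta> \<in> borel_measurable (borel :: ((real^'n) \<times> (real^'n)) measure)"
  shows "\<Theta> x \<in> borel_measurable (borel :: (real^'n) measure)"
proof -
  have "(\<lambda>y::real^'n. (x, y)) \<in> borel_measurable borel"
    by (intro borel_measurable_continuous_onI continuous_intros)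
  from measurable_compose[OF this assms] show ?thesis by simp
qed

lemma sl_y: assumes "case_prod \<Theta> \<in> borel_measurable (borel :: ((real^'n) \<times> (real^'n)) measure)"
  shows "(\<lambda>x. \<Theta> x y) \<in> borel_measurable (borel :: (real^'n) measure)"
proof -
  have "(\<lambda>x::real^'n. (x, y)) \<in> borel_measurable borel"
    by (intro borel_measurable_continuous_onI continuous_intros)
  from measurable_compose[OF this assms] show ?thesis by simp
qed

lemma nn_fold_M:
  fixes \<Theta> :: "real^'n \<Rightarrow> real^'n \<Rightarrow> ennreal"
  assumes meas: "case_prod \<Theta> \<in> borel_measurable borel"
    and diag: "\<And>x y k. \<Theta> (x + lv k) (y + lv k) = \<Theta> x y"
  shows "(\<integral>\<^sup>+z. indicator Hc (fst z) * \<Theta> (fst z) (snd z) \<partial>(lborel \<Otimes>\<^sub>M lborel))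
       = (\<integral>\<^sup>+z. indicator Hc (snd z) * \<Theta> (fst z) (snd z) \<partial>(lborel \<Otimes>\<^sub>M lborel))"
proof -
  have [measurable]: "Hc \<times> UNIV \<in> sets borel" "UNIV \<times> Hc \<in> sets borel"
    by (auto intro!: borel_Times)
  have e1: "(\<lambda>z. indicator Hc (fst z) * \<Theta> (fst z) (snd z)) = (\<lambda>z. indicator (Hc \<times> UNIV) z * case_prod \<Theta> z)"
    by (auto simp: indicator_def fun_eq_iff)
  have e2: "(\<lambda>z. indicator Hc (snd z) * \<Theta> (fst z) (snd z)) = (\<lambda>z. indicator (UNIV \<times> Hc) z * case_prod \<Theta> z)"
    by (auto simp: indicator_def fun_eq_iff)
  have m1: "(\<lambda>z. indicator Hc (fst z) * \<Theta> (fst z) (snd z)) \<in> borel_measurable (lborel \<Otimes>\<^sub>M lborel)"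
    unfolding pair_meas_lb e1 using meas by measurable
  have m2: "(\<lambda>z. indicator Hc (snd z) * \<Theta> (fst z) (snd z)) \<in> borel_measurable (lborel \<Otimes>\<^sub>M lborel)"
    unfolding pair_meas_lb e2 using meas by measurable
  have mx: "\<Theta> x \<in> borel_measurable lborel" for x using sl_x[OF meas] by simp
  have my: "(\<lambda>x. \<Theta> x y) \<in> borel_measurable lborel" for y using sl_y[OF meas] by simp
  have "(\<integral>\<^sup>+z. indicator Hc (fst z) * \<Theta> (fst z) (snd z) \<partial>(lborel \<Otimes>\<^sub>M lborel))
      = (\<integral>\<^sup>+x. \<integral>\<^sup>+y. indicator Hc x * \<Theta> x y \<partial>lborel \<partial>lborel)"
    using lborel.nn_integral_fst[OF m1] by simp
  also have "\<dots> = (\<integral>\<^sup>+x. indicator Hc x * (\<integral>\<^sup>+y. \<Theta> x y \<partial>lborel) \<partial>lborel)"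
    by (simp add: nn_integral_cmult[OF mx])
  also have "\<dots> = (\<integral>\<^sup>+y. indicator Hc y * (\<integral>\<^sup>+x. \<Theta> x y \<partial>lborel) \<partial>lborel)"
    by (rule nn_fold[OF meas diag])
  also have "\<dots> = (\<integral>\<^sup>+y. \<integral>\<^sup>+x. indicator Hc y * \<Theta> x y \<partial>lborel \<partial>lborel)"
    by (simp add: nn_integral_cmult[OF my])
  also have "\<dots> = (\<integral>\<^sup>+z. indicator Hc (snd z) * \<Theta> (fst z) (snd z) \<partial>(lborel \<Otimes>\<^sub>M lborel))"
    using lborel_pair.nn_integral_snd[OF m2] by simp
  finally show ?thesis .
qed

lemma sfold:
  fixes \<Phi> :: "real^'n \<Rightarrow> real^'n \<Rightarrow> real"
  assumes meas: "case_prod \<Phi> \<in> borel_measurable borel"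
    and diag: "\<And>x y k. \<Phi> (x + lv k) (y + lv k) = \<Phi> x y"
    and fin: "(\<integral>\<^sup>+x. indicator Hc x * (\<integral>\<^sup>+y. ennreal \<bar>\<Phi> x y\<bar> \<partial>lborel) \<partial>lborel) < \<infinity>"
  shows "(\<integral>x. indicator Hc x * (\<integral>y. \<Phi> x y \<partial>lborel) \<partial>lborel)
       = (\<integral>y. indicator Hc y * (\<integral>x. \<Phi> x y \<partial>lborel) \<partial>lborel)"
proof -
  let ?M = "lborel \<Otimes>\<^sub>M lborel :: ((real^'n) \<times> (real^'n)) measure"
  define P1 where "P1 z = indicator Hc (fst z) * \<Phi> (fst z) (snd z)" for z
  define P2 where "P2 z = indicator Hc (snd z) * \<Phi> (fst z) (snd z)" for z
  have [measurable]: "Hc \<times> UNIV \<in> sets borel" "UNIV \<times> Hc \<in> sets borel"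
    by (auto intro!: borel_Times)
  have e1: "P1 = (\<lambda>z. indicator (Hc \<times> UNIV) z * case_prod \<Phi> z)"
    by (auto simp: P1_def indicator_def fun_eq_iff)
  have e2: "P2 = (\<lambda>z. indicator (UNIV \<times> Hc) z * case_prod \<Phi> z)"
    by (auto simp: P2_def indicator_def fun_eq_iff)
  have m1: "P1 \<in> borel_measurable ?M"
    unfolding pair_meas_lb e1 using meas by measurable
  have m2: "P2 \<in> borel_measurable ?M"
    unfolding pair_meas_lb e2 using meas by measurable
  have mT: "case_prod (\<lambda>x y. T (\<Phi> x y)) \<in> borel_measurable borel" if "continuous_on UNIV T" for T :: "real \<Rightarrow> ennreal"
  proof -
    have "T \<in> borel_measurable borel" using that by (rule borel_measurable_continuous_onI)
    from measurable_compose[OF meas this] show ?thesis by (simp add: case_prod_beta' o_def)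
  qed
  have key: "(\<integral>\<^sup>+z. indicator Hc (fst z) * T (\<Phi> (fst z) (snd z)) \<partial>?M)
       = (\<integral>\<^sup>+z. indicator Hc (snd z) * T (\<Phi> (fst z) (snd z)) \<partial>?M)"
    if "continuous_on UNIV T" for T :: "real \<Rightarrow> ennreal"
    by (rule nn_fold_M[OF mT[OF that]]) (simp add: diag)
  have ca: "continuous_on UNIV (\<lambda>r::real. ennreal \<bar>r\<bar>)" "continuous_on UNIV (\<lambda>r::real. ennreal r)"
    "continuous_on UNIV (\<lambda>r::real. ennreal (- r))"
    by (intro continuous_on_ennreal continuous_intros)+
  have ind_mult: "ennreal (indicator A a * r) = indicator A a * ennreal r" for A a r
    by (auto simp: indicator_def)
  have ind_abs: "\<bar>indicator A a * r\<bar> = indicator A a * \<bar>r\<bar>" for A a and r :: real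
    by (auto simp: indicator_def)
  have ind_negm: "ennreal (- (indicator A a * r)) = indicator A a * ennreal (- r)" for A a and r :: real
    by (auto simp: indicator_def)
  have ind_norm: "ennreal (norm (indicator A a * r)) = indicator A a * ennreal \<bar>r\<bar>" for A a and r :: real
    by (auto simp: indicator_def)
  have mx: "(\<lambda>y. ennreal \<bar>\<Phi> x y\<bar>) \<in> borel_measurable lborel" for x
    using sl_x[OF mT[OF ca(1)]] by simp
  have n1: "(\<integral>\<^sup>+z. ennreal (norm (P1 z)) \<partial>?M) < \<infinity>"
  proof -
    have "(\<integral>\<^sup>+z. ennreal (norm (P1 z)) \<partial>?M) = (\<integral>\<^sup>+x. \<integral>\<^sup>+y. ennreal (norm (P1 (x,y))) \<partial>lborel \<partial>lborel)"
      by (rule lborel.nn_integral_fst[symmetric]) (use m1 in measurable)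
    also have "\<dots> = (\<integral>\<^sup>+x. indicator Hc x * (\<integral>\<^sup>+y. ennreal \<bar>\<Phi> x y\<bar> \<partial>lborel) \<partial>lborel)"
      by (simp add: P1_def ind_abs ind_mult nn_integral_cmult[OF mx])
    finally show ?thesis using fin by simp
  qed
  have i1: "integrable ?M P1" using m1 n1 by (simp add: integrable_iff_bounded)
  have "(\<integral>\<^sup>+z. ennreal (norm (P1 z)) \<partial>?M) = (\<integral>\<^sup>+z. ennreal (norm (P2 z)) \<partial>?M)"
    unfolding P1_def P2_def ind_norm by (rule key[OF ca(1)])
  then have n2: "(\<integral>\<^sup>+z. ennreal (norm (P2 z)) \<partial>?M) < \<infinity>"
    using n1 by simp
  have i2: "integrable ?M P2" using m2 n2 by (simp add: integrable_iff_bounded)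
  have "(\<integral>x. indicator Hc x * (\<integral>y. \<Phi> x y \<partial>lborel) \<partial>lborel) = (\<integral>x. \<integral>y. P1 (x,y) \<partial>lborel \<partial>lborel)"
    by (simp add: P1_def)
  also have "\<dots> = integral\<^sup>L ?M P1" by (rule lborel_pair.integral_fst'[OF i1])
  also have "\<dots> = integral\<^sup>L ?M P2"
  proof -
    have k2: "(\<integral>\<^sup>+z. ennreal (P1 z) \<partial>?M) = (\<integral>\<^sup>+z. ennreal (P2 z) \<partial>?M)"
      unfolding P1_def P2_def ind_mult by (rule key[OF ca(2)])
    have k3: "(\<integral>\<^sup>+z. ennreal (- P1 z) \<partial>?M) = (\<integral>\<^sup>+z. ennreal (- P2 z) \<partial>?M)"
      unfolding P1_def P2_def ind_negm by (rule key[OF ca(3)])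
    show ?thesis
      unfolding real_lebesgue_integral_def[OF i1] real_lebesgue_integral_def[OF i2] k2 k3 ..
  qed
  also have "\<dots> = (\<integral>y. \<integral>x. P2 (x,y) \<partial>lborel \<partial>lborel)"
    using lborel_pair.integral_snd[of "\<lambda>x y. P2 (x,y)"] i2 by simp
  also have "\<dots> = (\<integral>y. indicator Hc y * (\<integral>x. \<Phi> x y \<partial>lborel) \<partial>lborel)"
    by (simp add: P2_def)
  finally show ?thesis .
qed



lemma One_nth [simp]: "(One::real^'n) $ i = 1"
  by (simp add: Cart_1[symmetric])

lemma Hc_sub: "Hc \<subseteq> cbox 0 (One::real^'n)"
  unfolding Hc_def by (auto simp only: mem_box_cart One_nth) (auto simp: less_imp_le)

lemma AE_cube_Hc: "AE x in lborel. indicator (cbox 0 (One::real^'n)) x = (indicator Hc x :: real)"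
proof (rule AE_I')
  have "emeasure lborel (cbox 0 (One::real^'n)) = 1" "emeasure lborel (box 0 (One::real^'n)) = 1"
    by (simp_all add: emeasure_lborel_cbox_eq emeasure_lborel_box_eq cart_eq_inner_axis[symmetric])
  moreover have "box 0 One \<subseteq> cbox 0 (One::real^'n)" by (rule box_subset_cbox)
  ultimately have "emeasure lborel (cbox 0 (One::real^'n) - box 0 One) = 0"
    by (subst emeasure_Diff) auto
  then show "cbox 0 (One::real^'n) - box 0 One \<in> null_sets lborel"
    by (auto simp: null_sets_def)
  show "{x \<in> space lborel. \<not> indicator (cbox 0 (One::real^'n)) x = (indicator Hc x :: real)} \<subseteq> cbox 0 One - box 0 One"
  proof
    fix x assume x: "x \<in> {x \<in> space lborel. \<not> indicator (cbox 0 (One::real^'n)) x = (indicator Hc x :: real)}"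
    have bH: "box 0 One \<subseteq> (Hc :: (real^'n) set)"
      unfolding Hc_def by (auto simp only: mem_box_cart One_nth) (auto simp: less_imp_le)
    from x have "(x \<in> cbox 0 One) \<noteq> (x \<in> Hc)" by (auto simp: indicator_def)
    with Hc_sub bH show "x \<in> cbox 0 One - box 0 One" by blast
  qed
qed

lemma TI:
  fixes h :: "real^'n \<Rightarrow> real"
  assumes "h \<in> borel_measurable borel"
  shows "torus_integral h = (\<integral>x. indicator Hc x * h x \<partial>lborel)"
  unfolding torus_integral_def set_lebesgue_integral_def
  by (rule integral_cong_AE) (use assms AE_cube_Hc in auto)

lemma torus_lv: "torus_fun h \<Longrightarrow> h (x + lv k) = h x"
  unfolding torus_fun_def using int_vec_lv by blast

locale ctx =
  fixes \<theta> :: "real^'n \<Rightarrow> real" and \<gamma> Q :: "real^'n \<Rightarrow> real^'n \<Rightarrow> real"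
  assumes th_cont: "continuous_on UNIV \<theta>" and th_pos: "\<And>x. \<theta> x > 0"
   and th_per: "\<And>x k. \<theta> (x + lv k) = \<theta> x"
   and ga_cont: "continuous_on UNIV (\<lambda>z. \<gamma> (fst z) (snd z))"
   and ga_pos: "\<And>x v. \<gamma> x v > 0"
   and ga_per: "\<And>x v k. \<gamma> (x + lv k) v = \<gamma> x v"
   and Q_eq: "\<And>x v. Q x v = \<theta> (x - v) * \<gamma> (x - v) v / \<theta> x"
   and ga_one: "\<And>x. (\<integral>v. \<gamma> x v \<partial>lborel) = 1"
   and Q_one: "\<And>x. (\<integral>v. Q x v \<partial>lborel) = 1"
   and th_int: "torus_integral \<theta> = 1"
begin

lemma th_meas[measurable]: "\<theta> \<in> borel_measurable borel"
  using th_cont by (rule borel_measurable_continuous_onI)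

lemma thne: "\<theta> x \<noteq> 0" using th_pos[of x] by simp

lemma thQ: "\<theta> x * Q x v = \<theta> (x - v) * \<gamma> (x - v) v"
  using th_pos[of x] by (simp add: Q_eq)

lemma ga_meas2: "(\<lambda>z. \<gamma> (fst z) (snd z)) \<in> borel_measurable borel"
  using ga_cont by (rule borel_measurable_continuous_onI)

lemma ga_cont_comp:
  assumes "continuous_on UNIV a" "continuous_on UNIV b"
  shows "continuous_on UNIV (\<lambda>z. \<gamma> (a z) (b z))"
proof -
  have "continuous_on UNIV ((\<lambda>z. \<gamma> (fst z) (snd z)) \<circ> (\<lambda>z. (a z, b z)))"
    by (rule continuous_on_compose) (auto intro!: continuous_intros assms continuous_on_subset[OF ga_cont])
  then show ?thesis by (simp add: o_def)
qed

lemma Q_cont: "continuous_on UNIV (\<lambda>z. Q (fst z) (snd z))"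
proof -
  have "continuous_on UNIV (\<lambda>z. \<theta> (fst z - snd z) * \<gamma> (fst z - snd z) (snd z) / \<theta> (fst z))"
    by (intro continuous_intros ga_cont_comp continuous_on_compose2[OF th_cont]) (auto simp: thne)
  then show ?thesis by (simp add: Q_eq)
qed

lemma Q_pos: "Q x v > 0"
  using th_pos ga_pos by (simp add: Q_eq)

lemma Q_per: "Q (x + lv k) v = Q x v"
proof -
  have e: "x + lv k - v = (x - v) + lv k" by (simp add: algebra_simps)
  show ?thesis by (simp only: Q_eq e th_per ga_per)
qed

lemma ga_int: "integrable lborel (\<gamma> x)"
  using ga_one[of x] not_integrable_integral_eq by fastforce

lemma Q_int: "integrable lborel (Q x)"
  using Q_one[of x] not_integrable_integral_eq by fastforce

lemma ga_nn: "(\<integral>\<^sup>+v. ennreal (\<gamma> x v) \<partial>lborel) = 1"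
  using nn_integral_eq_integral[OF ga_int] ga_pos ga_one by (simp add: less_imp_le)

lemma Q_nn: "(\<integral>\<^sup>+v. ennreal (Q x v) \<partial>lborel) = 1"
  using nn_integral_eq_integral[OF Q_int] Q_pos Q_one by (simp add: less_imp_le)

end


lemma WCS:
  fixes w h :: "'a \<Rightarrow> real"
  assumes w0: "\<And>x. 0 \<le> w x" and wi: "integrable M w" and hm[measurable]: "h \<in> borel_measurable M"
  shows "ennreal ((\<integral>x. w x * h x \<partial>M)\<^sup>2) \<le> ennreal (\<integral>x. w x \<partial>M) * (\<integral>\<^sup>+x. ennreal (w x * (h x)\<^sup>2) \<partial>M)"
proof -
  have wm[measurable]: "w \<in> borel_measurable M" using wi by (rule borel_measurable_integrable)
  have A0: "0 \<le> (\<integral>x. w x \<partial>M)" using w0 by (simp add: integral_nonneg)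
  have zcase: "(\<integral>x. w x * h x \<partial>M) = 0" if "(\<integral>x. w x \<partial>M) = 0"
  proof -
    have "AE x in M. w x = 0" using integral_nonneg_eq_0_iff_AE[OF wi] w0 that by simp
    then have "AE x in M. w x * h x = 0" by eventually_elim simp
    then have "(\<integral>x. w x * h x \<partial>M) = (\<integral>x. 0 \<partial>M)" by (intro integral_cong_AE) auto
    then show ?thesis by simp
  qed
  show ?thesis
  proof (cases "(\<integral>\<^sup>+x. ennreal (w x * (h x)\<^sup>2) \<partial>M) = \<infinity>")
    case True
    show ?thesis
    proof (cases "(\<integral>x. w x \<partial>M) = 0")
      case True then show ?thesis using zcase by simp
    next
      case False
      then have "ennreal (\<integral>x. w x \<partial>M) \<noteq> 0" using A0 by simp
      then show ?thesis using \<open>_ = \<infinity>\<close> by (simp add: ennreal_mult_top)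
    qed
  next
    case False
    have i2: "integrable M (\<lambda>x. w x * (h x)\<^sup>2)"
      by (rule integrableI_nonneg) (use False w0 in \<open>auto simp: top.not_eq_extremum\<close>)
    have i1: "integrable M (\<lambda>x. w x * h x)"
    proof (rule Bochner_Integration.integrable_bound[OF Bochner_Integration.integrable_add[OF wi i2]])
      show "AE x in M. norm (w x * h x) \<le> norm (w x + w x * (h x)\<^sup>2)"
      proof (rule AE_I2)
        fix x
        have q: "0 \<le> (\<bar>h x\<bar> - 1)\<^sup>2" by simp
        have "(\<bar>h x\<bar> - 1)\<^sup>2 = (h x)\<^sup>2 - 2 * \<bar>h x\<bar> + 1"
          by (simp add: power2_eq_square algebra_simps abs_mult_self_eq)
        then have "\<bar>h x\<bar> \<le> 1 + (h x)\<^sup>2" using q zero_le_power2[of "h x"] by linarith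
        then have "w x * \<bar>h x\<bar> \<le> w x * (1 + (h x)\<^sup>2)" using w0[of x] by (intro mult_left_mono)
        then show "norm (w x * h x) \<le> norm (w x + w x * (h x)\<^sup>2)"
          using w0[of x] by (simp add: abs_mult algebra_simps)
      qed
    qed simp
    define A where "A = (\<integral>x. w x \<partial>M)"
    define B where "B = (\<integral>x. w x * h x \<partial>M)"
    define C where "C = (\<integral>x. w x * (h x)\<^sup>2 \<partial>M)"
    have quad: "0 \<le> C - 2 * t * B + t\<^sup>2 * A" for t
    proof -
      have "0 \<le> (\<integral>x. w x * (h x - t)\<^sup>2 \<partial>M)" using w0 by (simp add: integral_nonneg)
      also have "(\<lambda>x. w x * (h x - t)\<^sup>2) = (\<lambda>x. w x * (h x)\<^sup>2 - (2 * t) * (w x * h x) + t\<^sup>2 * w x)"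
        by (auto simp: power2_eq_square algebra_simps)
      also have "(\<integral>x. w x * (h x)\<^sup>2 - (2 * t) * (w x * h x) + t\<^sup>2 * w x \<partial>M) = C - 2 * t * B + t\<^sup>2 * A"
        using i1 i2 wi by (simp add: A_def B_def C_def)
      finally show ?thesis .
    qed
    have BAC: "B\<^sup>2 \<le> A * C"
    proof (cases "A = 0")
      case True then show ?thesis using zcase by (simp add: A_def B_def)
    next
      case False
      then have Ap: "A > 0" using A0 by (simp add: A_def)
      have "0 \<le> C - 2 * (B / A) * B + (B / A)\<^sup>2 * A" by (rule quad)
      also have "\<dots> = C - B\<^sup>2 / A" using Ap by (simp add: power2_eq_square field_simps)
      finally show ?thesis using Ap by (simp add: field_simps)
    qed
    have Ce: "ennreal C = (\<integral>\<^sup>+x. ennreal (w x * (h x)\<^sup>2) \<partial>M)"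
      unfolding C_def by (rule nn_integral_eq_integral[OF i2, symmetric]) (use w0 in auto)
    have C0: "0 \<le> C" unfolding C_def using w0 by (simp add: integral_nonneg)
    have "ennreal (B\<^sup>2) \<le> ennreal (A * C)" using BAC by (rule ennreal_leI)
    also have "\<dots> = ennreal A * ennreal C" using A0 C0 by (simp add: A_def ennreal_mult)
    finally show ?thesis unfolding Ce A_def B_def .
  qed
qed

context ctx begin

lemma ga_x_cont: "continuous_on UNIV (\<gamma> x)"
  using ga_cont_comp[of "\<lambda>v. x" "\<lambda>v. v"] by (simp add: continuous_intros)

lemma Q_x_cont: "continuous_on UNIV (Q x)"
proof -
  have "continuous_on UNIV ((\<lambda>z. Q (fst z) (snd z)) \<circ> (\<lambda>v. (x, v)))"
    by (rule continuous_on_compose) (auto intro!: continuous_intros continuous_on_subset[OF Q_cont])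
  then show ?thesis by (simp add: o_def)
qed

lemma ga_x_meas[measurable]: "\<gamma> x \<in> borel_measurable borel"
  by (rule borel_measurable_continuous_onI[OF ga_x_cont])

lemma Q_x_meas[measurable]: "Q x \<in> borel_measurable borel"
  by (rule borel_measurable_continuous_onI[OF Q_x_cont])

lemma ga_diff_meas[measurable]: "(\<lambda>z. \<gamma> (fst z) (snd z - fst z)) \<in> borel_measurable borel"
  by (rule borel_measurable_continuous_onI, rule ga_cont_comp) (intro continuous_intros)+

lemma ga_diff_meas2[measurable]: "(\<lambda>z. \<gamma> (fst z) (snd z - fst z)) \<in> borel_measurable (lborel \<Otimes>\<^sub>M lborel)"
  unfolding pair_meas_lb by (rule ga_diff_meas)

lemma th_meas_l[measurable]: "\<theta> \<in> borel_measurable lborel"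
  by (simp add: measurable_lborel1)

lemma BIL:
  fixes a b :: "real^'n \<Rightarrow> ennreal"
  assumes ma[measurable]: "a \<in> borel_measurable borel" and mb[measurable]: "b \<in> borel_measurable borel"
   and pa: "\<And>x k. a (x + lv k) = a x" and pb: "\<And>x k. b (x + lv k) = b x"
  shows "(\<integral>\<^sup>+x. indicator Hc x * (ennreal (\<theta> x) * a x * (\<integral>\<^sup>+v. ennreal (\<gamma> x v) * b (x + v) \<partial>lborel)) \<partial>lborel)
       = (\<integral>\<^sup>+y. indicator Hc y * (ennreal (\<theta> y) * b y * (\<integral>\<^sup>+w. ennreal (Q y w) * a (y - w) \<partial>lborel)) \<partial>lborel)"
proof -
  define \<Theta> where "\<Theta> x y = ennreal (\<theta> x) * a x * ennreal (\<gamma> x (y - x)) * b y" for x y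
  have [measurable]: "a \<in> borel_measurable lborel" "b \<in> borel_measurable lborel"
    by (simp_all add: measurable_lborel1)
  have m0: "(\<lambda>z. ennreal (\<theta> (fst z)) * a (fst z) * ennreal (\<gamma> (fst z) (snd z - fst z)) * b (snd z)) \<in> borel_measurable borel"
    unfolding pair_meas_lb[symmetric] by measurable
  have meas: "case_prod \<Theta> \<in> borel_measurable borel"
    using m0 by (simp add: \<Theta>_def case_prod_beta')
  have diag: "\<Theta> (x + lv k) (y + lv k) = \<Theta> x y" for x y k
    by (simp add: \<Theta>_def th_per ga_per pa pb)
  have i1: "(\<integral>\<^sup>+y. \<Theta> x y \<partial>lborel) = ennreal (\<theta> x) * a x * (\<integral>\<^sup>+v. ennreal (\<gamma> x v) * b (x + v) \<partial>lborel)" for x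
  proof -
    have "(\<integral>\<^sup>+y. \<Theta> x y \<partial>lborel) = (\<integral>\<^sup>+v. \<Theta> x (x + v) \<partial>lborel)"
      by (rule nn_trans) (use sl_x[OF meas] in simp)
    also have "\<dots> = (\<integral>\<^sup>+v. (ennreal (\<theta> x) * a x) * (ennreal (\<gamma> x v) * b (x + v)) \<partial>lborel)"
      by (simp add: \<Theta>_def mult.assoc)
    also have "\<dots> = ennreal (\<theta> x) * a x * (\<integral>\<^sup>+v. ennreal (\<gamma> x v) * b (x + v) \<partial>lborel)"
      by (rule nn_integral_cmult) measurable
    finally show ?thesis .
  qed
  have i2: "(\<integral>\<^sup>+x. \<Theta> x y \<partial>lborel) = ennreal (\<theta> y) * b y * (\<integral>\<^sup>+w. ennreal (Q y w) * a (y - w) \<partial>lborel)" for y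
  proof -
    have "(\<integral>\<^sup>+x. \<Theta> x y \<partial>lborel) = (\<integral>\<^sup>+w. \<Theta> (y - w) y \<partial>lborel)"
      by (rule nn_refl) (use sl_y[OF meas] in simp)
    also have "\<dots> = (\<integral>\<^sup>+w. (ennreal (\<theta> y) * b y) * (ennreal (Q y w) * a (y - w)) \<partial>lborel)"
    proof (rule nn_integral_cong)
      fix w
      have "ennreal (\<theta> (y - w)) * ennreal (\<gamma> (y - w) w) = ennreal (\<theta> y) * ennreal (Q y w)"
        using thQ[of y w] th_pos ga_pos Q_pos
        by (simp add: ennreal_mult[symmetric] less_imp_le)
      then show "\<Theta> (y - w) y = (ennreal (\<theta> y) * b y) * (ennreal (Q y w) * a (y - w))"
        unfolding \<Theta>_def by (simp add: mult_ac)
    qed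
    also have "\<dots> = ennreal (\<theta> y) * b y * (\<integral>\<^sup>+w. ennreal (Q y w) * a (y - w) \<partial>lborel)"
      by (rule nn_integral_cmult) measurable
    finally show ?thesis .
  qed
  from nn_fold[OF meas diag] show ?thesis by (simp add: i1 i2)
qed


definition NN :: "(real^'n \<Rightarrow> real) \<Rightarrow> ennreal" where
  "NN h = (\<integral>\<^sup>+x. indicator Hc x * ennreal (\<theta> x * (h x)\<^sup>2) \<partial>lborel)"

definition L2 :: "(real^'n \<Rightarrow> real) \<Rightarrow> bool" where
  "L2 h \<longleftrightarrow> h \<in> borel_measurable borel \<and> (\<forall>x k. h (x + lv k) = h x) \<and> NN h < \<infinity>"

lemma ga_meas2l[measurable]: "(\<lambda>z. \<gamma> (fst z) (snd z)) \<in> borel_measurable (lborel \<Otimes>\<^sub>M lborel)"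
  unfolding pair_meas_lb by (rule ga_meas2)

lemma Q_meas2l[measurable]: "(\<lambda>z. Q (fst z) (snd z)) \<in> borel_measurable (lborel \<Otimes>\<^sub>M lborel)"
  unfolding pair_meas_lb by (rule borel_measurable_continuous_onI[OF Q_cont])

lemma F_meas:
  assumes hm: "h \<in> borel_measurable borel"
  shows "opF \<gamma> h \<in> borel_measurable borel"
proof -
  have [measurable]: "h \<in> borel_measurable lborel" using hm by (simp add: measurable_lborel1)
  have "(\<lambda>z. \<gamma> (fst z) (snd z) * h (fst z + snd z)) \<in> borel_measurable (lborel \<Otimes>\<^sub>M lborel)"
    by measurable
  then have "case_prod (\<lambda>x v. \<gamma> x v * h (x + v)) \<in> borel_measurable (lborel \<Otimes>\<^sub>M lborel)"
    by (simp add: case_prod_beta')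
  from lborel.borel_measurable_lebesgue_integral[OF this]
  show ?thesis unfolding opF_def[abs_def] by (simp add: measurable_lborel1)
qed

lemma Fs_meas:
  assumes hm: "h \<in> borel_measurable borel"
  shows "opFstar Q h \<in> borel_measurable borel"
proof -
  have [measurable]: "h \<in> borel_measurable lborel" using hm by (simp add: measurable_lborel1)
  have "(\<lambda>z. Q (fst z) (snd z) * h (fst z - snd z)) \<in> borel_measurable (lborel \<Otimes>\<^sub>M lborel)"
    by measurable
  then have "case_prod (\<lambda>x v. Q x v * h (x - v)) \<in> borel_measurable (lborel \<Otimes>\<^sub>M lborel)"
    by (simp add: case_prod_beta')
  from lborel.borel_measurable_lebesgue_integral[OF this]
  show ?thesis unfolding opFstar_def[abs_def] by (simp add: measurable_lborel1)
qed

lemma F_per: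
  assumes "\<And>x k. h (x + lv k) = h x"
  shows "opF \<gamma> h (x + lv k) = opF \<gamma> h x"
proof -
  have "h (x + lv k + v) = h (x + v)" for v
    using assms[of "x + v" k] by (simp add: algebra_simps)
  then show ?thesis unfolding opF_def by (simp add: ga_per)
qed

lemma Fs_per:
  assumes "\<And>x k. h (x + lv k) = h x"
  shows "opFstar Q h (x + lv k) = opFstar Q h x"
proof -
  have "h (x + lv k - v) = h (x - v)" for v
    using assms[of "x - v" k] by (simp add: algebra_simps)
  then show ?thesis unfolding opFstar_def by (simp add: Q_per)
qed

lemma F_jensen:
  assumes "h \<in> borel_measurable borel"
  shows "ennreal ((opF \<gamma> h x)\<^sup>2) \<le> (\<integral>\<^sup>+v. ennreal (\<gamma> x v) * ennreal ((h (x + v))\<^sup>2) \<partial>lborel)"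
proof -
  have [measurable]: "h \<in> borel_measurable lborel" using assms by (simp add: measurable_lborel1)
  have "ennreal ((opF \<gamma> h x)\<^sup>2) \<le> ennreal (\<integral>v. \<gamma> x v \<partial>lborel) * (\<integral>\<^sup>+v. ennreal (\<gamma> x v * (h (x + v))\<^sup>2) \<partial>lborel)"
    unfolding opF_def by (rule WCS) (use ga_pos ga_int in \<open>auto intro: less_imp_le\<close>)
  also have "\<dots> = (\<integral>\<^sup>+v. ennreal (\<gamma> x v) * ennreal ((h (x + v))\<^sup>2) \<partial>lborel)"
    using ga_pos by (simp add: ga_one ennreal_mult less_imp_le)
  finally show ?thesis .
qed

lemma Fs_jensen:
  assumes "h \<in> borel_measurable borel"
  shows "ennreal ((opFstar Q h x)\<^sup>2) \<le> (\<integral>\<^sup>+w. ennreal (Q x w) * ennreal ((h (x - w))\<^sup>2) \<partial>lborel)"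
proof -
  have [measurable]: "h \<in> borel_measurable lborel" using assms by (simp add: measurable_lborel1)
  have "ennreal ((opFstar Q h x)\<^sup>2) \<le> ennreal (\<integral>v. Q x v \<partial>lborel) * (\<integral>\<^sup>+v. ennreal (Q x v * (h (x - v))\<^sup>2) \<partial>lborel)"
    unfolding opFstar_def by (rule WCS) (use Q_pos Q_int in \<open>auto intro: less_imp_le\<close>)
  also have "\<dots> = (\<integral>\<^sup>+w. ennreal (Q x w) * ennreal ((h (x - w))\<^sup>2) \<partial>lborel)"
    using Q_pos by (simp add: Q_one ennreal_mult less_imp_le)
  finally show ?thesis .
qed

lemma INVg:
  assumes "h \<in> borel_measurable borel" "\<And>x k. h (x + lv k) = h x"
  shows "(\<integral>\<^sup>+x. indicator Hc x * (ennreal (\<theta> x) * (\<integral>\<^sup>+v. ennreal (\<gamma> x v) * ennreal ((h (x + v))\<^sup>2) \<partial>lborel)) \<partial>lborel) = NN h"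
proof -
  have [measurable]: "h \<in> borel_measurable borel" by fact
  have "(\<integral>\<^sup>+x. indicator Hc x * (ennreal (\<theta> x) * 1 * (\<integral>\<^sup>+v. ennreal (\<gamma> x v) * ennreal ((h (x + v))\<^sup>2) \<partial>lborel)) \<partial>lborel)
     = (\<integral>\<^sup>+y. indicator Hc y * (ennreal (\<theta> y) * ennreal ((h y)\<^sup>2) * (\<integral>\<^sup>+w. ennreal (Q y w) * 1 \<partial>lborel)) \<partial>lborel)"
    by (rule BIL[where a="\<lambda>_. 1" and b="\<lambda>y. ennreal ((h y)\<^sup>2)"]) (auto simp: assms(2))
  then show ?thesis
    by (simp add: NN_def Q_nn ennreal_mult[symmetric] th_pos less_imp_le)
qed

lemma INVs:
  assumes "h \<in> borel_measurable borel" "\<And>x k. h (x + lv k) = h x"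
  shows "(\<integral>\<^sup>+x. indicator Hc x * (ennreal (\<theta> x) * (\<integral>\<^sup>+w. ennreal (Q x w) * ennreal ((h (x - w))\<^sup>2) \<partial>lborel)) \<partial>lborel) = NN h"
proof -
  have [measurable]: "h \<in> borel_measurable borel" by fact
  have "(\<integral>\<^sup>+x. indicator Hc x * (ennreal (\<theta> x) * ennreal ((h x)\<^sup>2) * (\<integral>\<^sup>+v. ennreal (\<gamma> x v) * 1 \<partial>lborel)) \<partial>lborel)
     = (\<integral>\<^sup>+y. indicator Hc y * (ennreal (\<theta> y) * 1 * (\<integral>\<^sup>+w. ennreal (Q y w) * ennreal ((h (y - w))\<^sup>2) \<partial>lborel)) \<partial>lborel)"
    by (rule BIL[where b="\<lambda>_. 1" and a="\<lambda>y. ennreal ((h y)\<^sup>2)"]) (auto simp: assms(2))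
  then show ?thesis
    by (simp add: NN_def ga_nn ennreal_mult[symmetric] th_pos less_imp_le)
qed

lemma NN_F:
  assumes "h \<in> borel_measurable borel" "\<And>x k. h (x + lv k) = h x"
  shows "NN (opF \<gamma> h) \<le> NN h"
proof -
  have "NN (opF \<gamma> h) \<le> (\<integral>\<^sup>+x. indicator Hc x * (ennreal (\<theta> x) * (\<integral>\<^sup>+v. ennreal (\<gamma> x v) * ennreal ((h (x + v))\<^sup>2) \<partial>lborel)) \<partial>lborel)"
    unfolding NN_def
    by (intro nn_integral_mono mult_left_mono)
       (auto simp: ennreal_mult th_pos less_imp_le intro!: mult_left_mono F_jensen[OF assms(1)])
  then show ?thesis using INVg[OF assms] by simp
qed

lemma NN_Fs:
  assumes "h \<in> borel_measurable borel" "\<And>x k. h (x + lv k) = h x"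
  shows "NN (opFstar Q h) \<le> NN h"
proof -
  have "NN (opFstar Q h) \<le> (\<integral>\<^sup>+x. indicator Hc x * (ennreal (\<theta> x) * (\<integral>\<^sup>+w. ennreal (Q x w) * ennreal ((h (x - w))\<^sup>2) \<partial>lborel)) \<partial>lborel)"
    unfolding NN_def
    by (intro nn_integral_mono mult_left_mono)
       (auto simp: ennreal_mult th_pos less_imp_le intro!: mult_left_mono Fs_jensen[OF assms(1)])
  then show ?thesis using INVs[OF assms] by simp
qed

lemma L2_F: "L2 h \<Longrightarrow> L2 (opF \<gamma> h)"
  unfolding L2_def using F_meas F_per NN_F by (meson le_less_trans)

lemma L2_Fs: "L2 h \<Longrightarrow> L2 (opFstar Q h)"
  unfolding L2_def using Fs_meas Fs_per NN_Fs by (meson le_less_trans)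


lemma INVm:
  assumes "h \<in> borel_measurable borel"
  shows "(\<lambda>x. \<integral>\<^sup>+v. ennreal (\<gamma> x v) * ennreal ((h (x + v))\<^sup>2) \<partial>lborel) \<in> borel_measurable lborel"
proof -
  have [measurable]: "h \<in> borel_measurable lborel" using assms by (simp add: measurable_lborel1)
  have "(\<lambda>z. ennreal (\<gamma> (fst z) (snd z)) * ennreal ((h (fst z + snd z))\<^sup>2)) \<in> borel_measurable (lborel \<Otimes>\<^sub>M lborel)"
    by measurable
  then have "case_prod (\<lambda>x v. ennreal (\<gamma> x v) * ennreal ((h (x + v))\<^sup>2)) \<in> borel_measurable (lborel \<Otimes>\<^sub>M lborel)"
    by (simp add: case_prod_beta')
  from lborel.borel_measurable_nn_integral[OF this] show ?thesis .
qed

lemma absprod_le: "\<bar>a * b\<bar> \<le> a\<^sup>2 + (b::real)\<^sup>2"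
proof -
  have q: "0 \<le> (\<bar>a\<bar> - \<bar>b\<bar>)\<^sup>2" by simp
  have "(\<bar>a\<bar> - \<bar>b\<bar>)\<^sup>2 = a\<^sup>2 - 2 * \<bar>a * b\<bar> + b\<^sup>2"
    by (simp add: power2_eq_square algebra_simps abs_mult abs_mult_self_eq)
  then show ?thesis using q abs_ge_zero[of "a * b"] by linarith
qed

lemma D:
  assumes f: "L2 f" and g: "L2 g"
  shows "(\<integral>x. indicator Hc x * (f x * \<theta> x * opF \<gamma> g x) \<partial>lborel)
       = (\<integral>y. indicator Hc y * (g y * \<theta> y * opFstar Q f y) \<partial>lborel)"
proof -
  have fm[measurable]: "f \<in> borel_measurable borel" and gm[measurable]: "g \<in> borel_measurable borel"
    and fp: "\<And>x k. f (x + lv k) = f x" and gp: "\<And>x k. g (x + lv k) = g x"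
    and fN: "NN f < \<infinity>" and gN: "NN g < \<infinity>" using f g by (auto simp: L2_def)
  have [measurable]: "f \<in> borel_measurable lborel" "g \<in> borel_measurable lborel"
    by (simp_all add: measurable_lborel1)
  define \<Phi> where "\<Phi> x y = (f x * \<theta> x) * (\<gamma> x (y - x) * g y)" for x y
  have m0: "(\<lambda>z. (f (fst z) * \<theta> (fst z)) * (\<gamma> (fst z) (snd z - fst z) * g (snd z))) \<in> borel_measurable borel"
    unfolding pair_meas_lb[symmetric] by measurable
  have meas: "case_prod \<Phi> \<in> borel_measurable borel"
    using m0 by (simp add: \<Phi>_def case_prod_beta')
  have diag: "\<Phi> (x + lv k) (y + lv k) = \<Phi> x y" for x y k
    by (simp add: \<Phi>_def th_per ga_per fp gp)
  have bnd: "ennreal \<bar>\<Phi> x y\<bar> \<le> ennreal (\<theta> x * (f x)\<^sup>2) * ennreal (\<gamma> x (y - x))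
        + ennreal (\<theta> x) * (ennreal (\<gamma> x (y - x)) * ennreal ((g y)\<^sup>2))" for x y
  proof -
    have p: "0 \<le> \<theta> x * \<gamma> x (y - x)" using th_pos ga_pos by (simp add: less_imp_le)
    have "\<bar>\<Phi> x y\<bar> = (\<theta> x * \<gamma> x (y - x)) * \<bar>f x * g y\<bar>"
      using p th_pos[of x] ga_pos[of x "y - x"] by (simp add: \<Phi>_def abs_mult mult_ac)
    also have "\<dots> \<le> (\<theta> x * \<gamma> x (y - x)) * ((f x)\<^sup>2 + (g y)\<^sup>2)"
      by (rule mult_left_mono[OF absprod_le p])
    also have "\<dots> = \<theta> x * (f x)\<^sup>2 * \<gamma> x (y - x) + \<theta> x * (\<gamma> x (y - x) * (g y)\<^sup>2)"
      by (simp add: algebra_simps)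
    finally have "ennreal \<bar>\<Phi> x y\<bar> \<le> ennreal (\<theta> x * (f x)\<^sup>2 * \<gamma> x (y - x) + \<theta> x * (\<gamma> x (y - x) * (g y)\<^sup>2))"
      by (rule ennreal_leI)
    also have "\<dots> = ennreal (\<theta> x * (f x)\<^sup>2) * ennreal (\<gamma> x (y - x))
        + ennreal (\<theta> x) * (ennreal (\<gamma> x (y - x)) * ennreal ((g y)\<^sup>2))"
    proof -
      have a0: "0 \<le> \<theta> x * (f x)\<^sup>2 * \<gamma> x (y - x)" and b0: "0 \<le> \<theta> x * (\<gamma> x (y - x) * (g y)\<^sup>2)"
        using th_pos[of x] ga_pos[of x "y - x"] by (simp_all add: less_imp_le)
      have c0: "0 \<le> \<theta> x * (f x)\<^sup>2" "0 \<le> \<gamma> x (y - x) * (g y)\<^sup>2"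
        using th_pos[of x] ga_pos[of x "y - x"] by (simp_all add: less_imp_le)
      show ?thesis
        unfolding ennreal_plus[OF a0 b0]
        using ennreal_mult[OF c0(1), of "\<gamma> x (y - x)"] ennreal_mult[of "\<theta> x" "\<gamma> x (y - x) * (g y)\<^sup>2"]
          ennreal_mult[of "\<gamma> x (y - x)" "(g y)\<^sup>2"] th_pos[of x] ga_pos[of x "y - x"]
        by (simp add: less_imp_le)
    qed
    finally show ?thesis .
  qed
  have myg: "(\<lambda>y. ennreal (\<gamma> x (y - x))) \<in> borel_measurable lborel" for x
  proof -
    have "continuous_on UNIV (\<lambda>y. \<gamma> x (y - x))" by (rule ga_cont_comp) (intro continuous_intros)+
    then have "(\<lambda>y. \<gamma> x (y - x)) \<in> borel_measurable borel" by (rule borel_measurable_continuous_onI)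
    then show ?thesis by (simp add: measurable_lborel1)
  qed
  have tr1: "(\<integral>\<^sup>+y. ennreal (\<gamma> x (y - x)) \<partial>lborel) = 1" for x
    using nn_trans[of "\<lambda>y. ennreal (\<gamma> x (y - x))" x] ga_nn[of x] by simp
  have tr2: "(\<integral>\<^sup>+y. ennreal (\<gamma> x (y - x)) * ennreal ((g y)\<^sup>2) \<partial>lborel)
      = (\<integral>\<^sup>+v. ennreal (\<gamma> x v) * ennreal ((g (x + v))\<^sup>2) \<partial>lborel)" for x
    using nn_trans[of "\<lambda>y. ennreal (\<gamma> x (y - x)) * ennreal ((g y)\<^sup>2)" x] by simp
  have inner: "(\<integral>\<^sup>+y. ennreal \<bar>\<Phi> x y\<bar> \<partial>lborel) \<le> ennreal (\<theta> x * (f x)\<^sup>2)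
      + ennreal (\<theta> x) * (\<integral>\<^sup>+v. ennreal (\<gamma> x v) * ennreal ((g (x + v))\<^sup>2) \<partial>lborel)" for x
  proof -
    have "(\<integral>\<^sup>+y. ennreal \<bar>\<Phi> x y\<bar> \<partial>lborel) \<le> (\<integral>\<^sup>+y. ennreal (\<theta> x * (f x)\<^sup>2) * ennreal (\<gamma> x (y - x))
        + ennreal (\<theta> x) * (ennreal (\<gamma> x (y - x)) * ennreal ((g y)\<^sup>2)) \<partial>lborel)"
      by (rule nn_integral_mono) (rule bnd)
    also have "\<dots> = ennreal (\<theta> x * (f x)\<^sup>2) * (\<integral>\<^sup>+y. ennreal (\<gamma> x (y - x)) \<partial>lborel)
        + ennreal (\<theta> x) * (\<integral>\<^sup>+y. ennreal (\<gamma> x (y - x)) * ennreal ((g y)\<^sup>2) \<partial>lborel)"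
    proof -
      have m1: "(\<lambda>y. ennreal (\<theta> x * (f x)\<^sup>2) * ennreal (\<gamma> x (y - x))) \<in> borel_measurable lborel"
        using myg[of x] by measurable
      have m2: "(\<lambda>y. ennreal (\<theta> x) * (ennreal (\<gamma> x (y - x)) * ennreal ((g y)\<^sup>2))) \<in> borel_measurable lborel"
        using myg[of x] by measurable
      have m3: "(\<lambda>y. ennreal (\<gamma> x (y - x)) * ennreal ((g y)\<^sup>2)) \<in> borel_measurable lborel"
        using myg[of x] by measurable
      show ?thesis
        unfolding nn_integral_add[OF m1 m2] nn_integral_cmult[OF myg] nn_integral_cmult[OF m3] ..
    qed
    finally show ?thesis by (simp add: tr1 tr2)
  qed
  have fin: "(\<integral>\<^sup>+x. indicator Hc x * (\<integral>\<^sup>+y. ennreal \<bar>\<Phi> x y\<bar> \<partial>lborel) \<partial>lborel) < \<infinity>"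
  proof -
    have "(\<integral>\<^sup>+x. indicator Hc x * (\<integral>\<^sup>+y. ennreal \<bar>\<Phi> x y\<bar> \<partial>lborel) \<partial>lborel)
      \<le> (\<integral>\<^sup>+x. indicator Hc x * ennreal (\<theta> x * (f x)\<^sup>2)
        + indicator Hc x * (ennreal (\<theta> x) * (\<integral>\<^sup>+v. ennreal (\<gamma> x v) * ennreal ((g (x + v))\<^sup>2) \<partial>lborel)) \<partial>lborel)"
    proof (rule nn_integral_mono)
      fix x
      have "indicator Hc x * (\<integral>\<^sup>+y. ennreal \<bar>\<Phi> x y\<bar> \<partial>lborel) \<le> indicator Hc x * (ennreal (\<theta> x * (f x)\<^sup>2)
      + ennreal (\<theta> x) * (\<integral>\<^sup>+v. ennreal (\<gamma> x v) * ennreal ((g (x + v))\<^sup>2) \<partial>lborel))"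
        by (rule mult_left_mono[OF inner]) simp
      then show "indicator Hc x * (\<integral>\<^sup>+y. ennreal \<bar>\<Phi> x y\<bar> \<partial>lborel) \<le> indicator Hc x * ennreal (\<theta> x * (f x)\<^sup>2)
        + indicator Hc x * (ennreal (\<theta> x) * (\<integral>\<^sup>+v. ennreal (\<gamma> x v) * ennreal ((g (x + v))\<^sup>2) \<partial>lborel))"
        by (simp add: distrib_left)
    qed
    also have "\<dots> = NN f + NN g"
    proof -
      have [measurable]: "(\<lambda>x. \<integral>\<^sup>+v. ennreal (\<gamma> x v) * ennreal ((g (x + v))\<^sup>2) \<partial>lborel) \<in> borel_measurable lborel"
        by (rule INVm[OF gm])
      have m1: "(\<lambda>x. indicator Hc x * ennreal (\<theta> x * (f x)\<^sup>2)) \<in> borel_measurable lborel" by measurable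
      have m2: "(\<lambda>x. indicator Hc x * (ennreal (\<theta> x) * (\<integral>\<^sup>+v. ennreal (\<gamma> x v) * ennreal ((g (x + v))\<^sup>2) \<partial>lborel))) \<in> borel_measurable lborel"
        by measurable
      show ?thesis unfolding nn_integral_add[OF m1 m2] INVg[OF gm gp] NN_def ..
    qed
    finally show ?thesis using fN gN by (simp add: order_le_less_trans)
  qed
  have L: "(\<integral>y. \<Phi> x y \<partial>lborel) = f x * \<theta> x * opF \<gamma> g x" for x
  proof -
    have "(\<integral>y. \<gamma> x (y - x) * g y \<partial>lborel) = (\<integral>v. \<gamma> x v * g (x + v) \<partial>lborel)"
      using int_trans[of "\<lambda>y. \<gamma> x (y - x) * g y" x] by simp
    then show ?thesis by (simp add: \<Phi>_def opF_def)
  qed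
  have R: "(\<integral>x. \<Phi> x y \<partial>lborel) = g y * \<theta> y * opFstar Q f y" for y
  proof -
    have "(\<integral>x. \<Phi> x y \<partial>lborel) = (\<integral>w. \<Phi> (y - w) y \<partial>lborel)"
      by (rule int_refl) (use sl_y[OF meas] in simp)
    also have "\<dots> = (\<integral>w. (g y * \<theta> y) * (Q y w * f (y - w)) \<partial>lborel)"
      by (rule Bochner_Integration.integral_cong) (auto simp: \<Phi>_def mult_ac thQ[symmetric])
    also have "\<dots> = g y * \<theta> y * opFstar Q f y" by (simp add: opFstar_def)
    finally show ?thesis .
  qed
  from sfold[OF meas diag fin] show ?thesis by (simp add: L R)
qed


lemma int_trans_int:
  fixes f :: "real^'n \<Rightarrow> real"
  assumes "integrable lborel f"
  shows "integrable lborel (\<lambda>v. f (x + v))"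
proof -
  have [measurable]: "f \<in> borel_measurable borel"
    using borel_measurable_integrable[OF assms] by (simp add: measurable_lborel1)
  have "integrable (distr lborel borel (\<lambda>v. x + 1 *\<^sub>R v)) f"
    using assms by (simp only: distr_affine_eq[of 1 x] abs_one)
  then show ?thesis by (subst (asm) integrable_distr_eq) auto
qed

lemma ind_ennreal: "ennreal (indicator A a * r) = indicator A a * ennreal r"
  by (auto simp: indicator_def)

lemma thH_int: "integrable lborel (\<lambda>y. indicator Hc y * \<theta> y)"
  and thH_one: "(\<integral>y. indicator Hc y * \<theta> y \<partial>lborel) = 1"
  and thH_nn: "(\<integral>\<^sup>+y. indicator Hc y * ennreal (\<theta> y) \<partial>lborel) = 1"
proof -
  show o: "(\<integral>y. indicator Hc y * \<theta> y \<partial>lborel) = 1" using th_int TI[OF th_meas] by simp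
  show i: "integrable lborel (\<lambda>y. indicator Hc y * \<theta> y)"
    using o not_integrable_integral_eq by fastforce
  have "(\<integral>\<^sup>+y. ennreal (indicator Hc y * \<theta> y) \<partial>lborel) = ennreal 1"
    by (subst nn_integral_eq_integral[OF i]) (use th_pos o in \<open>auto simp: less_imp_le\<close>)
  then show "(\<integral>\<^sup>+y. indicator Hc y * ennreal (\<theta> y) \<partial>lborel) = 1"
    by (simp only: ind_ennreal ennreal_1)
qed


lemma L2_int2:
  assumes "L2 h"
  shows "integrable lborel (\<lambda>y. indicator Hc y * (\<theta> y * (h y)\<^sup>2))"
proof -
  have [measurable]: "h \<in> borel_measurable borel" using assms by (simp add: L2_def)
  show ?thesis
    by (rule integrableI_nonneg) (use assms th_pos in \<open>auto simp: L2_def NN_def ind_ennreal less_imp_le\<close>)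
qed

lemma L2_int:
  assumes "L2 h"
  shows "integrable lborel (\<lambda>y. indicator Hc y * (\<theta> y * h y))"
proof (rule Bochner_Integration.integrable_bound[OF Bochner_Integration.integrable_add[OF thH_int L2_int2[OF assms]]])
  have [measurable]: "h \<in> borel_measurable borel" using assms by (simp add: L2_def)
  show "(\<lambda>y. indicator Hc y * (\<theta> y * h y)) \<in> borel_measurable lborel" by measurable
  show "AE x in lborel. norm (indicator Hc x * (\<theta> x * h x)) \<le> norm (indicator Hc x * \<theta> x + indicator Hc x * (\<theta> x * (h x)\<^sup>2))"
  proof (rule AE_I2)
    fix x
    have q: "0 \<le> (\<bar>h x\<bar> - 1)\<^sup>2" by simp
    have "(\<bar>h x\<bar> - 1)\<^sup>2 = (h x)\<^sup>2 - 2 * \<bar>h x\<bar> + 1"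
      by (simp add: power2_eq_square algebra_simps abs_mult_self_eq)
    then have hb: "\<bar>h x\<bar> \<le> 1 + (h x)\<^sup>2" using q zero_le_power2[of "h x"] by linarith
    have "\<theta> x * \<bar>h x\<bar> \<le> \<theta> x * (1 + (h x)\<^sup>2)" using th_pos[of x] hb by (intro mult_left_mono) auto
    moreover have "norm (indicator Hc x * (\<theta> x * h x)) = indicator Hc x * (\<theta> x * \<bar>h x\<bar>)"
      using th_pos[of x] by (simp add: indicator_def abs_mult)
    moreover have "norm (indicator Hc x * \<theta> x + indicator Hc x * (\<theta> x * (h x)\<^sup>2)) = indicator Hc x * (\<theta> x * (1 + (h x)\<^sup>2))"
      using th_pos[of x] by (simp add: indicator_def distrib_left)
    ultimately show "norm (indicator Hc x * (\<theta> x * h x)) \<le> norm (indicator Hc x * \<theta> x + indicator Hc x * (\<theta> x * (h x)\<^sup>2))"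
      by (simp add: mult_left_mono)
  qed
qed

lemma LB: "\<exists>m. 0 < m \<and> m \<le> 1/2 \<and> (\<forall>x\<in>cbox 0 One. \<forall>y\<in>cbox 0 One. m * \<theta> y \<le> \<gamma> x (y - x))"
proof -
  let ?S = "cbox 0 (One::real^'n) \<times> cbox 0 (One::real^'n)"
  let ?r = "\<lambda>z::(real^'n)\<times>(real^'n). \<gamma> (fst z) (snd z - fst z) / \<theta> (snd z)"
  have n: "continuous_on UNIV (\<lambda>z::(real^'n)\<times>(real^'n). \<gamma> (fst z) (snd z - fst z))"
    by (rule ga_cont_comp) (intro continuous_intros)+
  have d: "continuous_on UNIV (\<lambda>z::(real^'n)\<times>(real^'n). \<theta> (snd z))"
    by (rule continuous_on_compose2[OF th_cont continuous_on_snd]) auto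
  have "continuous_on UNIV ?r"
    by (rule continuous_on_divide[OF n d]) (simp add: thne)
  then have c: "continuous_on ?S ?r" by (rule continuous_on_subset) simp
  have "compact ?S" by (intro compact_Times compact_cbox)
  moreover have "?S \<noteq> {}" by (auto simp: mem_box_cart)
  ultimately obtain z0 where z0: "z0 \<in> ?S" "\<And>z. z \<in> ?S \<Longrightarrow> ?r z0 \<le> ?r z"
    using continuous_attains_inf[OF _ _ c] by blast
  define m where "m = min (?r z0) (1/2)"
  have "?r z0 > 0" using ga_pos th_pos by simp
  then have "0 < m" by (simp add: m_def)
  moreover have "m \<le> 1/2" unfolding m_def by (rule min.cobounded2)
  moreover have "m * \<theta> y \<le> \<gamma> x (y - x)" if "x \<in> cbox 0 One" "y \<in> cbox 0 One" for x y
  proof -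
    have "m \<le> ?r (x, y)" using z0(2)[of "(x,y)"] that by (auto simp: m_def)
    then show ?thesis using th_pos[of y] by (simp add: field_simps)
  qed
  ultimately show ?thesis by blast
qed

end


context ctx begin

lemma CON:
  assumes m: "0 < m" "m \<le> 1/2" "\<forall>x\<in>cbox 0 One. \<forall>y\<in>cbox 0 One. m * \<theta> y \<le> \<gamma> x (y - x)"
   and h: "L2 h" and mz: "(\<integral>y. indicator Hc y * (\<theta> y * h y) \<partial>lborel) = 0"
  shows "NN (opF \<gamma> h) \<le> ennreal ((1 - m)\<^sup>2) * NN h"
proof -
  have hm[measurable]: "h \<in> borel_measurable borel" and hp: "\<And>x k. h (x + lv k) = h x"
    and hN: "NN h < \<infinity>" using h by (auto simp: L2_def)
  have [measurable]: "h \<in> borel_measurable lborel" by (simp add: measurable_lborel1)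
  obtain r where r: "NN h = ennreal r" "0 \<le> r" using hN by (cases "NN h") auto
  have m1: "0 \<le> 1 - m" using m by simp
  have PW: "ennreal ((opF \<gamma> h x)\<^sup>2) + ennreal ((1 - m) * m) * NN h
      \<le> ennreal (1 - m) * (\<integral>\<^sup>+v. ennreal (\<gamma> x v) * ennreal ((h (x + v))\<^sup>2) \<partial>lborel)" if x: "x \<in> Hc" for x
  proof -
    define \<nu> where "\<nu> v = m * (indicator Hc (x + v) * \<theta> (x + v))" for v
    define w where "w v = \<gamma> x v - \<nu> v" for v
    have \<nu>le: "\<nu> v \<le> \<gamma> x v" for v
    proof (cases "x + v \<in> Hc")
      case True
      then have "m * \<theta> (x + v) \<le> \<gamma> x (x + v - x)" using m(3) x Hc_sub by blast
      then show ?thesis using True by (simp add: \<nu>_def)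
    next
      case False then show ?thesis using ga_pos[of x v] by (simp add: \<nu>_def less_imp_le)
    qed
    have \<nu>0: "0 \<le> \<nu> v" for v using m th_pos[of "x + v"] by (simp add: \<nu>_def)
    have \<nu>m[measurable]: "\<nu> \<in> borel_measurable lborel" unfolding \<nu>_def[abs_def] by measurable
    have \<nu>i: "integrable lborel \<nu>"
      unfolding \<nu>_def by (intro integrable_mult_right int_trans_int[OF thH_int])
    have \<nu>int: "(\<integral>v. \<nu> v \<partial>lborel) = m"
      using int_trans[of "\<lambda>y. indicator Hc y * \<theta> y" x] thH_one by (simp add: \<nu>_def)
    have w0: "0 \<le> w v" for v using \<nu>le[of v] by (simp add: w_def)
    have wi: "integrable lborel w" unfolding w_def[abs_def]
      by (rule Bochner_Integration.integrable_diff[OF ga_int \<nu>i])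
    have wint: "(\<integral>v. w v \<partial>lborel) = 1 - m"
      unfolding w_def[abs_def] using Bochner_Integration.integral_diff[OF ga_int \<nu>i] ga_one \<nu>int by simp
    have wm[measurable]: "w \<in> borel_measurable lborel" using wi by (rule borel_measurable_integrable)
    have nn\<nu>: "(\<integral>\<^sup>+v. ennreal (\<nu> v * (h (x + v))\<^sup>2) \<partial>lborel) = ennreal m * NN h"
    proof -
      have "(\<integral>\<^sup>+v. ennreal (\<nu> v * (h (x + v))\<^sup>2) \<partial>lborel)
          = (\<integral>\<^sup>+v. ennreal m * (indicator Hc (x + v) * ennreal (\<theta> (x + v) * (h (x + v))\<^sup>2)) \<partial>lborel)"
      proof (rule nn_integral_cong)
        fix v
        have "ennreal (\<nu> v * (h (x + v))\<^sup>2) = ennreal (m * (indicator Hc (x + v) * (\<theta> (x + v) * (h (x + v))\<^sup>2)))"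
          by (simp add: \<nu>_def mult_ac)
        also have "\<dots> = ennreal m * ennreal (indicator Hc (x + v) * (\<theta> (x + v) * (h (x + v))\<^sup>2))"
          using m th_pos[of "x + v"] by (intro ennreal_mult) auto
        also have "\<dots> = ennreal m * (indicator Hc (x + v) * ennreal (\<theta> (x + v) * (h (x + v))\<^sup>2))"
          by (simp only: ind_ennreal)
        finally show "ennreal (\<nu> v * (h (x + v))\<^sup>2) = ennreal m * (indicator Hc (x + v) * ennreal (\<theta> (x + v) * (h (x + v))\<^sup>2))" .
      qed
      also have "\<dots> = ennreal m * (\<integral>\<^sup>+v. indicator Hc (x + v) * ennreal (\<theta> (x + v) * (h (x + v))\<^sup>2) \<partial>lborel)"
        by (rule nn_integral_cmult) measurable
      also have "(\<integral>\<^sup>+v. indicator Hc (x + v) * ennreal (\<theta> (x + v) * (h (x + v))\<^sup>2) \<partial>lborel) = NN h"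
        unfolding NN_def by (rule nn_trans[symmetric]) measurable
      finally show ?thesis .
    qed
    have split: "(\<integral>\<^sup>+v. ennreal (\<gamma> x v) * ennreal ((h (x + v))\<^sup>2) \<partial>lborel)
        = (\<integral>\<^sup>+v. ennreal (w v * (h (x + v))\<^sup>2) \<partial>lborel) + (\<integral>\<^sup>+v. ennreal (\<nu> v * (h (x + v))\<^sup>2) \<partial>lborel)"
    proof -
      have "(\<integral>\<^sup>+v. ennreal (\<gamma> x v) * ennreal ((h (x + v))\<^sup>2) \<partial>lborel)
          = (\<integral>\<^sup>+v. ennreal (w v * (h (x + v))\<^sup>2) + ennreal (\<nu> v * (h (x + v))\<^sup>2) \<partial>lborel)"
      proof (rule nn_integral_cong)
        fix v
        have "ennreal (\<gamma> x v) * ennreal ((h (x + v))\<^sup>2) = ennreal (w v * (h (x + v))\<^sup>2 + \<nu> v * (h (x + v))\<^sup>2)"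
          using ga_pos[of x v] by (simp add: ennreal_mult[symmetric] w_def algebra_simps less_imp_le)
        also have "\<dots> = ennreal (w v * (h (x + v))\<^sup>2) + ennreal (\<nu> v * (h (x + v))\<^sup>2)"
          using w0[of v] \<nu>0[of v] by (intro ennreal_plus) auto
        finally show "ennreal (\<gamma> x v) * ennreal ((h (x + v))\<^sup>2) = ennreal (w v * (h (x + v))\<^sup>2) + ennreal (\<nu> v * (h (x + v))\<^sup>2)" .
      qed
      also have "\<dots> = (\<integral>\<^sup>+v. ennreal (w v * (h (x + v))\<^sup>2) \<partial>lborel) + (\<integral>\<^sup>+v. ennreal (\<nu> v * (h (x + v))\<^sup>2) \<partial>lborel)"
        by (rule nn_integral_add) measurable
      finally show ?thesis .
    qed
    have wcs: "ennreal ((\<integral>v. w v * h (x + v) \<partial>lborel)\<^sup>2) \<le> ennreal (1 - m) * (\<integral>\<^sup>+v. ennreal (w v * (h (x + v))\<^sup>2) \<partial>lborel)"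
      using WCS[OF w0 wi, of "\<lambda>v. h (x + v)"] wint by simp
    have em: "ennreal ((1 - m) * m) = ennreal (1 - m) * ennreal m" using m1 m by (simp add: ennreal_mult)
    show ?thesis
    proof (cases "integrable lborel (\<lambda>v. \<gamma> x v * h (x + v))")
      case True
      have \<nu>hi: "integrable lborel (\<lambda>v. \<nu> v * h (x + v))"
      proof -
        have "integrable lborel (\<lambda>v. m * (indicator Hc (x + v) * (\<theta> (x + v) * h (x + v))))"
          by (intro integrable_mult_right int_trans_int[OF L2_int[OF h]])
        then show ?thesis by (simp add: \<nu>_def mult_ac)
      qed
      have \<nu>h0: "(\<integral>v. \<nu> v * h (x + v) \<partial>lborel) = 0"
      proof -
        have "(\<integral>v. \<nu> v * h (x + v) \<partial>lborel) = m * (\<integral>v. indicator Hc (x + v) * (\<theta> (x + v) * h (x + v)) \<partial>lborel)"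
          by (simp add: \<nu>_def mult_ac)
        also have "(\<integral>v. indicator Hc (x + v) * (\<theta> (x + v) * h (x + v)) \<partial>lborel) = 0"
          using int_trans[of "\<lambda>y. indicator Hc y * (\<theta> y * h y)" x] mz by simp
        finally show ?thesis by simp
      qed
      have "(\<integral>v. w v * h (x + v) \<partial>lborel) = (\<integral>v. \<gamma> x v * h (x + v) - \<nu> v * h (x + v) \<partial>lborel)"
        by (simp add: w_def algebra_simps)
      also have "\<dots> = opF \<gamma> h x"
        using Bochner_Integration.integral_diff[OF True \<nu>hi] \<nu>h0 by (simp add: opF_def)
      finally have eF: "(\<integral>v. w v * h (x + v) \<partial>lborel) = opF \<gamma> h x" .
      have "ennreal ((opF \<gamma> h x)\<^sup>2) + ennreal ((1 - m) * m) * NN h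
          \<le> ennreal (1 - m) * (\<integral>\<^sup>+v. ennreal (w v * (h (x + v))\<^sup>2) \<partial>lborel) + ennreal (1 - m) * (ennreal m * NN h)"
        using wcs eF em by (simp add: mult.assoc add_right_mono)
      also have "\<dots> = ennreal (1 - m) * (\<integral>\<^sup>+v. ennreal (\<gamma> x v) * ennreal ((h (x + v))\<^sup>2) \<partial>lborel)"
        unfolding split nn\<nu> by (simp add: distrib_left)
      finally show ?thesis .
    next
      case False
      then have "opF \<gamma> h x = 0" by (simp add: opF_def not_integrable_integral_eq)
      then have "ennreal ((opF \<gamma> h x)\<^sup>2) + ennreal ((1 - m) * m) * NN h = ennreal (1 - m) * (ennreal m * NN h)"
        using em by (simp add: mult.assoc)
      also have "\<dots> \<le> ennreal (1 - m) * (\<integral>\<^sup>+v. ennreal (\<gamma> x v) * ennreal ((h (x + v))\<^sup>2) \<partial>lborel)"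
        unfolding split nn\<nu> by (intro mult_left_mono) auto
      finally show ?thesis .
    qed
  qed
  have FhM[measurable]: "opF \<gamma> h \<in> borel_measurable lborel"
    using F_meas[OF hm] by (simp add: measurable_lborel1)
  have IM[measurable]: "(\<lambda>x. \<integral>\<^sup>+v. ennreal (\<gamma> x v) * ennreal ((h (x + v))\<^sup>2) \<partial>lborel) \<in> borel_measurable lborel"
    by (rule INVm[OF hm])
  define c where "c = ennreal ((1 - m) * m) * NN h"
  have e1: "NN (opF \<gamma> h) + c = (\<integral>\<^sup>+x. indicator Hc x * (ennreal (\<theta> x) * (ennreal ((opF \<gamma> h x)\<^sup>2) + c)) \<partial>lborel)"
  proof -
    have "(\<integral>\<^sup>+x. indicator Hc x * (ennreal (\<theta> x) * (ennreal ((opF \<gamma> h x)\<^sup>2) + c)) \<partial>lborel)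
        = (\<integral>\<^sup>+x. indicator Hc x * ennreal (\<theta> x * (opF \<gamma> h x)\<^sup>2) + (indicator Hc x * ennreal (\<theta> x)) * c \<partial>lborel)"
      using th_pos by (intro nn_integral_cong) (simp add: ennreal_mult less_imp_le distrib_left mult_ac)
    also have "\<dots> = NN (opF \<gamma> h) + (\<integral>\<^sup>+x. indicator Hc x * ennreal (\<theta> x) \<partial>lborel) * c"
      unfolding NN_def by (subst nn_integral_add) (auto simp: nn_integral_multc)
    finally show ?thesis using thH_nn by simp
  qed
  also have "\<dots> \<le> (\<integral>\<^sup>+x. indicator Hc x * (ennreal (\<theta> x) * (ennreal (1 - m) * (\<integral>\<^sup>+v. ennreal (\<gamma> x v) * ennreal ((h (x + v))\<^sup>2) \<partial>lborel))) \<partial>lborel)"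
  proof (rule nn_integral_mono)
    fix x
    show "indicator Hc x * (ennreal (\<theta> x) * (ennreal ((opF \<gamma> h x)\<^sup>2) + c))
        \<le> indicator Hc x * (ennreal (\<theta> x) * (ennreal (1 - m) * (\<integral>\<^sup>+v. ennreal (\<gamma> x v) * ennreal ((h (x + v))\<^sup>2) \<partial>lborel)))"
    proof (cases "x \<in> Hc")
      case True then show ?thesis using PW[OF True] by (simp add: c_def mult_left_mono)
    qed simp
  qed
  also have "\<dots> = ennreal (1 - m) * (\<integral>\<^sup>+x. indicator Hc x * (ennreal (\<theta> x) * (\<integral>\<^sup>+v. ennreal (\<gamma> x v) * ennreal ((h (x + v))\<^sup>2) \<partial>lborel)) \<partial>lborel)"
    by (subst nn_integral_cmult[symmetric]) (auto simp: mult_ac)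
  also have "\<dots> = ennreal (1 - m) * NN h" by (simp add: INVg[OF hm hp])
  finally have fin: "NN (opF \<gamma> h) + c \<le> ennreal (1 - m) * NN h" .
  have "NN (opF \<gamma> h) < \<infinity>" using NN_F[OF hm hp] hN by (simp add: order_le_less_trans)
  then obtain a where a: "NN (opF \<gamma> h) = ennreal a" "0 \<le> a" by (cases "NN (opF \<gamma> h)") auto
  have "ennreal (a + (1 - m) * m * r) \<le> ennreal ((1 - m) * r)"
    using fin m1 m r a unfolding c_def by (simp add: ennreal_mult[symmetric] ennreal_plus[symmetric] del: ennreal_plus)
  then have "a + (1 - m) * m * r \<le> (1 - m) * r" using m1 r by (simp add: ennreal_le_iff)
  then have "a \<le> (1 - m)\<^sup>2 * r" by (simp add: power2_eq_square algebra_simps)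
  then show ?thesis using a r m1 by (simp add: ennreal_mult[symmetric] ennreal_leI)
qed


lemma L2_one: "L2 (\<lambda>_. 1)"
  unfolding L2_def NN_def using thH_nn by simp

lemma Fs_one: "opFstar Q (\<lambda>_. 1) y = 1"
  unfolding opFstar_def using Q_one by simp

lemma MEAN:
  assumes "L2 u"
  shows "(\<integral>y. indicator Hc y * (\<theta> y * opF \<gamma> u y) \<partial>lborel) = (\<integral>y. indicator Hc y * (\<theta> y * u y) \<partial>lborel)"
  using D[OF L2_one assms] by (simp add: Fs_one mult_ac)

lemma L2_Fn: "L2 g \<Longrightarrow> L2 ((opF \<gamma> ^^ n) g)"
  by (induction n) (auto intro: L2_F)

lemma L2_Fsn: "L2 g \<Longrightarrow> L2 ((opFstar Q ^^ n) g)"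
  by (induction n) (auto intro: L2_Fs)

lemma ITER:
  assumes m: "0 < m" "m \<le> 1/2" "\<forall>x\<in>cbox 0 One. \<forall>y\<in>cbox 0 One. m * \<theta> y \<le> \<gamma> x (y - x)"
   and g: "L2 g" and mz: "(\<integral>y. indicator Hc y * (\<theta> y * g y) \<partial>lborel) = 0"
  shows "(\<integral>y. indicator Hc y * (\<theta> y * (opF \<gamma> ^^ n) g y) \<partial>lborel) = 0 \<and>
     NN ((opF \<gamma> ^^ n) g) \<le> ennreal ((1 - m) ^ (2 * n)) * NN g"
proof (induction n)
  case 0 then show ?case using mz by simp
next
  case (Suc n)
  have L: "L2 ((opF \<gamma> ^^ n) g)" by (rule L2_Fn[OF g])
  have "(\<integral>y. indicator Hc y * (\<theta> y * (opF \<gamma> ^^ Suc n) g y) \<partial>lborel) = 0"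
    using MEAN[OF L] Suc by simp
  moreover have "NN ((opF \<gamma> ^^ Suc n) g) \<le> ennreal ((1 - m) ^ (2 * Suc n)) * NN g"
  proof -
    have "NN ((opF \<gamma> ^^ Suc n) g) \<le> ennreal ((1 - m)\<^sup>2) * NN ((opF \<gamma> ^^ n) g)"
      using CON[OF m L] Suc by simp
    also have "\<dots> \<le> ennreal ((1 - m)\<^sup>2) * (ennreal ((1 - m) ^ (2 * n)) * NN g)"
      using Suc by (intro mult_left_mono) auto
    also have "\<dots> = ennreal ((1 - m) ^ (2 * Suc n)) * NN g"
    proof -
      have p: "(1 - m) ^ (2 * Suc n) = (1 - m)\<^sup>2 * (1 - m) ^ (2 * n)"
        by (simp add: power_add[symmetric])
      have "ennreal ((1 - m) ^ (2 * Suc n)) = ennreal ((1 - m)\<^sup>2) * ennreal ((1 - m) ^ (2 * n))"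
        unfolding p using m by (intro ennreal_mult) auto
      then show ?thesis by (simp only: mult.assoc)
    qed
    finally show ?thesis .
  qed
  ultimately show ?case ..
qed

lemma DUAL:
  assumes f: "L2 f" and g: "L2 g"
  shows "(\<integral>x. indicator Hc x * (g x * (opFstar Q ^^ n) f x * \<theta> x) \<partial>lborel)
       = (\<integral>x. indicator Hc x * (f x * (opF \<gamma> ^^ n) g x * \<theta> x) \<partial>lborel)"
  using f
proof (induction n arbitrary: f)
  case 0 then show ?case by (simp add: mult_ac)
next
  case (Suc n)
  have e1: "(opFstar Q ^^ Suc n) f = (opFstar Q ^^ n) (opFstar Q f)" by (simp only: funpow_Suc_right o_def)
  have "(\<integral>x. indicator Hc x * (g x * (opFstar Q ^^ Suc n) f x * \<theta> x) \<partial>lborel)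
      = (\<integral>x. indicator Hc x * (opFstar Q f x * (opF \<gamma> ^^ n) g x * \<theta> x) \<partial>lborel)"
    unfolding e1 by (rule Suc.IH[OF L2_Fs[OF Suc.prems]])
  also have "\<dots> = (\<integral>x. indicator Hc x * ((opF \<gamma> ^^ n) g x * \<theta> x * opFstar Q f x) \<partial>lborel)"
    by (simp add: mult_ac)
  also have "\<dots> = (\<integral>x. indicator Hc x * (f x * \<theta> x * opF \<gamma> ((opF \<gamma> ^^ n) g) x) \<partial>lborel)"
    using D[OF Suc.prems L2_Fn[OF g, of n]] by simp
  also have "\<dots> = (\<integral>x. indicator Hc x * (f x * (opF \<gamma> ^^ Suc n) g x * \<theta> x) \<partial>lborel)"
    by (simp add: mult_ac)
  finally show ?case .
qed

definition I2 :: "(real^'n \<Rightarrow> real) \<Rightarrow> real" where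
  "I2 h = (\<integral>y. indicator Hc y * (\<theta> y * (h y)\<^sup>2) \<partial>lborel)"

lemma NN_I2: "L2 h \<Longrightarrow> NN h = ennreal (I2 h)"
  unfolding NN_def I2_def
  by (subst nn_integral_eq_integral[OF L2_int2, symmetric]) (use th_pos in \<open>auto simp: less_imp_le ind_ennreal\<close>)

lemma I2_nonneg: "0 \<le> I2 h"
  unfolding I2_def by (rule Bochner_Integration.integral_nonneg) (use th_pos in \<open>auto simp: less_imp_le\<close>)

lemma BND:
  assumes f: "L2 f" and u: "L2 u" and t: "0 < t"
  shows "\<bar>\<integral>x. indicator Hc x * (f x * u x * \<theta> x) \<partial>lborel\<bar> \<le> (t * I2 f + I2 u / t) / 2"
proof -
  have [measurable]: "f \<in> borel_measurable borel" "u \<in> borel_measurable borel" using f u by (auto simp: L2_def)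
  define B where "B x = (t / 2) * (indicator Hc x * (\<theta> x * (f x)\<^sup>2)) + (1 / (2 * t)) * (indicator Hc x * (\<theta> x * (u x)\<^sup>2))" for x
  have Bi: "integrable lborel B"
    unfolding B_def[abs_def] by (intro Bochner_Integration.integrable_add integrable_mult_right L2_int2 f u)
  have pw: "\<bar>indicator Hc x * (f x * u x * \<theta> x)\<bar> \<le> B x" for x
  proof -
    have q: "0 \<le> (t * \<bar>f x\<bar> - \<bar>u x\<bar>)\<^sup>2" by simp
    have "(t * \<bar>f x\<bar> - \<bar>u x\<bar>)\<^sup>2 = t\<^sup>2 * (f x)\<^sup>2 - 2 * t * \<bar>f x * u x\<bar> + (u x)\<^sup>2"
      by (simp add: power2_eq_square algebra_simps abs_mult abs_mult_self_eq)
    then have "2 * t * \<bar>f x * u x\<bar> \<le> t\<^sup>2 * (f x)\<^sup>2 + (u x)\<^sup>2" using q by linarith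
    then have "\<bar>f x * u x\<bar> \<le> (t / 2) * (f x)\<^sup>2 + (1 / (2 * t)) * (u x)\<^sup>2"
      using t by (simp add: field_simps power2_eq_square)
    then have "\<theta> x * \<bar>f x * u x\<bar> \<le> \<theta> x * ((t / 2) * (f x)\<^sup>2 + (1 / (2 * t)) * (u x)\<^sup>2)"
      using th_pos[of x] by (intro mult_left_mono) auto
    then show ?thesis using th_pos[of x]
      by (auto simp: B_def indicator_def abs_mult algebra_simps)
  qed
  have [measurable]: "f \<in> borel_measurable lborel" "u \<in> borel_measurable lborel" by (simp_all add: measurable_lborel1)
  have Xm: "(\<lambda>x. indicator Hc x * (f x * u x * \<theta> x)) \<in> borel_measurable lborel" by measurable
  have Xi: "integrable lborel (\<lambda>x. indicator Hc x * (f x * u x * \<theta> x))"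
  proof (rule Bochner_Integration.integrable_bound[OF Bi Xm], rule AE_I2)
    fix x
    show "norm (indicator Hc x * (f x * u x * \<theta> x)) \<le> norm (B x)"
      using pw[of x] abs_ge_self[of "B x"] by (simp only: real_norm_def)
  qed
  have "\<bar>\<integral>x. indicator Hc x * (f x * u x * \<theta> x) \<partial>lborel\<bar> \<le> (\<integral>x. B x \<partial>lborel)"
    by (rule integral_abs_bound_integral[OF Xi Bi pw])
  also have "(\<integral>x. B x \<partial>lborel) = (t / 2) * I2 f + (1 / (2 * t)) * I2 u"
    unfolding B_def I2_def
    by (subst Bochner_Integration.integral_add) (auto intro!: integrable_mult_right L2_int2 f u)
  also have "\<dots> = (t * I2 f + I2 u / t) / 2" using t by (simp add: field_simps)
  finally show ?thesis .
qed

end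


theorem mainTheorem4:
  fixes U :: "real^'n \<Rightarrow> real" and P :: "real^'n" and \<epsilon> :: real
    and \<phi> \<phi>b :: "real^'n \<Rightarrow> real" and lam :: real
    and \<theta> :: "real^'n \<Rightarrow> real" and \<gamma> Q :: "real^'n \<Rightarrow> real^'n \<Rightarrow> real"
  assumes U_torus: "torus_fun U" and U_smooth: "smooth_fun U"
    and eps_pos: "\<epsilon> > 0"
    and phi_torus: "torus_fun \<phi>" and phi_diff: "\<phi> differentiable_on UNIV"
    and phib_torus: "torus_fun \<phi>b" and phib_diff: "\<phi>b differentiable_on UNIV"
    and phi_int: "\<And>x. integrable lborel (\<lambda>v. exp (- (lagr U P x v + \<phi> (x + v)) / \<epsilon>))"
    and phi_eq: "\<And>x. - \<epsilon> * ln (\<integral>v. exp (- (lagr U P x v + \<phi> (x + v)) / \<epsilon>) \<partial>lborel)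
                     = \<phi> x + lam"
    and phib_int: "\<And>x. integrable lborel (\<lambda>v. exp (- (lagr U P (x + v) (- v) + \<phi>b (x + v)) / \<epsilon>))"
    and phib_eq: "\<And>x. - \<epsilon> * ln (\<integral>v. exp (- (lagr U P (x + v) (- v) + \<phi>b (x + v)) / \<epsilon>) \<partial>lborel)
                     = \<phi>b x + lam"
    and theta_def: "\<And>x. \<theta> x = exp (- (\<phi> x + \<phi>b x) / \<epsilon>)"
    and theta_prob: "torus_integral \<theta> = 1"
    and gamma_def: "\<And>x v. \<gamma> x v = exp (- (lagr U P x v + \<phi> (x + v) - \<phi> x - lam) / \<epsilon>)"
    and Q_def: "\<And>x v. Q x v = \<theta> (x - v) * \<gamma> (x - v) v / \<theta> x"
    and gamma_one: "\<And>x. (\<integral>v. \<gamma> x v \<partial>lborel) = 1"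
    and Q_one: "\<And>x. (\<integral>v. Q x v \<partial>lborel) = 1"
    and holo: "holonomic (\<lambda>x v. \<theta> x * \<gamma> x v)"
    and fixpt_unique: "\<And>h. torus_fun h \<Longrightarrow> continuous_on UNIV h \<Longrightarrow> (\<forall>x. h x > 0) \<Longrightarrow>
        opF \<gamma> h = h \<Longrightarrow> \<exists>c. \<forall>x. h x = c"
  shows "\<exists>\<rho>. 0 < \<rho> \<and> \<rho> < 1 \<and>
    (\<forall>f g. L2_theta \<theta> f \<and> L2_theta \<theta> g \<and>
        torus_integral (\<lambda>x. f x * \<theta> x) = 0 \<and> torus_integral (\<lambda>x. g x * \<theta> x) = 0 \<longrightarrow>
      (\<forall>n. backward_corr \<theta> Q g f n = torus_integral (\<lambda>x. f x * ((opF \<gamma> ^^ n) g) x * \<theta> x)) \<and>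
      (\<exists>C. \<forall>n. \<bar>backward_corr \<theta> Q g f n\<bar> \<le> C * \<rho> ^ n))"
proof -
  have "U differentiable_on UNIV" using U_smooth unfolding smooth_fun_def
    by (metis foldr.simps(1) id_apply)
  then have Uc: "continuous_on UNIV U" by (rule differentiable_imp_continuous_on)
  have pc: "continuous_on UNIV \<phi>" by (rule differentiable_imp_continuous_on[OF phi_diff])
  have pbc: "continuous_on UNIV \<phi>b" by (rule differentiable_imp_continuous_on[OF phib_diff])
  have th_eq: "\<theta> = (\<lambda>x. exp (- (\<phi> x + \<phi>b x) / \<epsilon>))" using theta_def by auto
  have th_cont: "continuous_on UNIV \<theta>" unfolding th_eq by (intro continuous_intros pc pbc) (use eps_pos in auto)
  have th_pos: "\<And>x. \<theta> x > 0" by (simp add: theta_def)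
  have th_per: "\<And>x k. \<theta> (x + lv k) = \<theta> x"
    by (simp add: theta_def torus_lv[OF phi_torus] torus_lv[OF phib_torus])
  have ga_eq: "(\<lambda>z. \<gamma> (fst z) (snd z)) = (\<lambda>z. exp (- ((norm (snd z))\<^sup>2 / 2 - U (fst z) + P \<bullet> snd z
      + \<phi> (fst z + snd z) - \<phi> (fst z) - lam) / \<epsilon>))"
    by (auto simp: gamma_def lagr_def)
  have c1: "continuous_on UNIV (\<lambda>z::(real^'n)\<times>(real^'n). U (fst z))"
    by (rule continuous_on_compose2[OF Uc continuous_on_fst]) auto
  have c2: "continuous_on UNIV (\<lambda>z::(real^'n)\<times>(real^'n). \<phi> (fst z))"
    by (rule continuous_on_compose2[OF pc continuous_on_fst]) auto
  have c3: "continuous_on UNIV (\<lambda>z::(real^'n)\<times>(real^'n). \<phi> (fst z + snd z))"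
    by (rule continuous_on_compose2[OF pc]) (auto intro!: continuous_intros)
  have ga_cont: "continuous_on UNIV (\<lambda>z. \<gamma> (fst z) (snd z))"
    unfolding ga_eq by (intro continuous_intros c1 c2 c3) (use eps_pos in auto)
  have ga_pos: "\<And>x v. \<gamma> x v > 0" by (simp add: gamma_def)
  have ga_per: "\<And>x v k. \<gamma> (x + lv k) v = \<gamma> x v"
  proof -
    fix x v and k :: "'n \<Rightarrow> int"
    have e: "x + lv k + v = (x + v) + lv k" by (simp add: algebra_simps)
    show "\<gamma> (x + lv k) v = \<gamma> x v"
      unfolding gamma_def lagr_def e by (simp add: torus_lv[OF U_torus] torus_lv[OF phi_torus])
  qed
  interpret ctx \<theta> \<gamma> Q
    by unfold_locales (rule th_cont th_pos th_per ga_cont ga_pos ga_per Q_def gamma_one Q_one theta_prob)+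
  obtain m where m: "0 < m" "m \<le> 1/2" "\<forall>x\<in>cbox 0 One. \<forall>y\<in>cbox 0 One. m * \<theta> y \<le> \<gamma> x (y - x)"
    using LB by blast
  have toL2: "L2 f" if "L2_theta \<theta> f" for f
  proof -
    have tf: "torus_fun f" and fm: "f \<in> borel_measurable lborel"
      and si: "set_integrable lborel (cbox 0 One) (\<lambda>x. (f x)\<^sup>2 * \<theta> x)"
      using that by (auto simp: L2_theta_def)
    have fin: "(\<integral>\<^sup>+x. ennreal (norm (indicator (cbox 0 One) x *\<^sub>R ((f x)\<^sup>2 * \<theta> x))) \<partial>lborel) < \<infinity>"
      using si unfolding set_integrable_def integrable_iff_bounded by simp
    have "NN f \<le> (\<integral>\<^sup>+x. ennreal (norm (indicator (cbox 0 One) x *\<^sub>R ((f x)\<^sup>2 * \<theta> x))) \<partial>lborel)"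
      unfolding NN_def
    proof (rule nn_integral_mono)
      fix x
      show "indicator Hc x * ennreal (\<theta> x * (f x)\<^sup>2) \<le> ennreal (norm (indicator (cbox 0 One) x *\<^sub>R ((f x)\<^sup>2 * \<theta> x)))"
      proof (cases "x \<in> Hc")
        case True
        then have "x \<in> cbox 0 One" using Hc_sub by blast
        then show ?thesis using True th_pos[of x] by (simp add: abs_mult mult.commute)
      qed simp
    qed
    then have "NN f < \<infinity>" using fin by (simp add: order_le_less_trans)
    then show ?thesis
      unfolding L2_def using fm torus_lv[OF tf] by (simp add: measurable_lborel1)
  qed
  have mean0: "(\<integral>y. indicator Hc y * (\<theta> y * f y) \<partial>lborel) = 0"
    if "L2 f" "torus_integral (\<lambda>x. f x * \<theta> x) = 0" for f
  proof -
    have [measurable]: "f \<in> borel_measurable borel" using that by (simp add: L2_def)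
    have "torus_integral (\<lambda>x. f x * \<theta> x) = (\<integral>x. indicator Hc x * (f x * \<theta> x) \<partial>lborel)"
      by (rule TI) measurable
    then show ?thesis using that by (simp add: mult_ac)
  qed
  show ?thesis
  proof (rule exI[of _ "1 - m"], intro conjI allI impI)
    show "0 < 1 - m" "1 - m < 1" using m by auto
    fix f g
    assume H: "L2_theta \<theta> f \<and> L2_theta \<theta> g \<and> torus_integral (\<lambda>x. f x * \<theta> x) = 0 \<and> torus_integral (\<lambda>x. g x * \<theta> x) = 0"
    have f: "L2 f" and g: "L2 g" using H toL2 by auto
    have gz: "(\<integral>y. indicator Hc y * (\<theta> y * g y) \<partial>lborel) = 0" using H g mean0 by auto
    have corr: "backward_corr \<theta> Q g f n = (\<integral>x. indicator Hc x * (f x * (opF \<gamma> ^^ n) g x * \<theta> x) \<partial>lborel)" for n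
    proof -
      have [measurable]: "g \<in> borel_measurable borel" "(opFstar Q ^^ n) f \<in> borel_measurable borel"
        using g L2_Fsn[OF f, of n] by (auto simp: L2_def)
      have "backward_corr \<theta> Q g f n = (\<integral>x. indicator Hc x * (g x * (opFstar Q ^^ n) f x * \<theta> x) \<partial>lborel)"
        unfolding backward_corr_def by (rule TI) measurable
      then show ?thesis using DUAL[OF f g, of n] by simp
    qed
    show "backward_corr \<theta> Q g f n = torus_integral (\<lambda>x. f x * (opF \<gamma> ^^ n) g x * \<theta> x)" for n
    proof -
      have [measurable]: "f \<in> borel_measurable borel" "(opF \<gamma> ^^ n) g \<in> borel_measurable borel"
        using f L2_Fn[OF g, of n] by (auto simp: L2_def)
      have "torus_integral (\<lambda>x. f x * (opF \<gamma> ^^ n) g x * \<theta> x) = (\<integral>x. indicator Hc x * (f x * (opF \<gamma> ^^ n) g x * \<theta> x) \<partial>lborel)"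
        by (rule TI) measurable
      then show ?thesis using corr[of n] by simp
    qed
    show "\<exists>C. \<forall>n. \<bar>backward_corr \<theta> Q g f n\<bar> \<le> C * (1 - m) ^ n"
    proof (intro exI[of _ "(I2 f + I2 g) / 2"] allI)
      fix n
      define u where "u = (opF \<gamma> ^^ n) g"
      define t where "t = (1 - m) ^ n"
      have t: "0 < t" using m by (simp add: t_def)
      have u: "L2 u" unfolding u_def by (rule L2_Fn[OF g])
      have "NN u \<le> ennreal ((1 - m) ^ (2 * n)) * NN g" using ITER[OF m g gz] by (simp add: u_def)
      then have "ennreal (I2 u) \<le> ennreal ((1 - m) ^ (2 * n) * I2 g)"
        using NN_I2[OF u] NN_I2[OF g] m I2_nonneg by (simp add: ennreal_mult)
      then have "I2 u \<le> (1 - m) ^ (2 * n) * I2 g"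
        using m I2_nonneg by (simp add: ennreal_le_iff)
      moreover have "(1 - m) ^ (2 * n) = t * t" unfolding t_def power_add[symmetric] mult_2 ..
      ultimately have Iu: "I2 u \<le> t * t * I2 g" by simp
      have Iu2: "I2 u / t \<le> t * I2 g"
        by (subst pos_divide_le_eq[OF t]) (use Iu in \<open>simp add: mult_ac\<close>)
      have "\<bar>backward_corr \<theta> Q g f n\<bar> \<le> (t * I2 f + I2 u / t) / 2"
        unfolding corr u_def[symmetric] by (rule BND[OF f u t])
      also have "\<dots> \<le> (t * I2 f + t * I2 g) / 2"
        using Iu2 by (intro divide_right_mono add_left_mono) auto
      also have "\<dots> = (I2 f + I2 g) / 2 * (1 - m) ^ n" by (simp add: t_def algebra_simps)
      finally show "\<bar>backward_corr \<theta> Q g f n\<bar> \<le> (I2 f + I2 g) / 2 * (1 - m) ^ n" .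
    qed
  qed
qed


end
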